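(* Let $F$ be an entire function with at least one zero, and $\ell\in\mathbb{Z}$. Its Newton map $N_F(z)=z-F(z)/F'(z)$ belongs to the class $\mathbf{R}_\ell$ if and only if $\ell=1$ and $$F(z)=e^{\Lambda z}\Psi(e^{2\pi iz}),\qquad \Psi(w)=w^{m_0}P(w)e^{Q(w)+\widetilde{Q}(1/w)},$$ where $\Lambda\in\mathbb{C}$, $m_0\in\mathbb{Z}$, and $P,Q,\widetilde{Q}$ are polynomials with $P(0)\neq0$ and $P^{-1}(0)\cap\mathbb{C}^*\neq\emptyset$; in addition $\Lambda\neq-2\pi i(m_0+\deg P)$ if $Q$ is constant, and $\Lambda\neq-2\pi i m_0$ if $\widetilde{Q}$ is constant.
   Context: For $\ell\in\mathbb{Z}$, $\mathbf{R}_\ell$ is the class of meromorphic functions $f(z)=\ell z+R(e^{2\pi iz})$ where $R$ is a non-constant rational map with $R(0)\neq\infty$, $R(\infty)\neq\infty$ and $R^{-1}(\infty)\neq\emptyset$ (i.e. $R=\frac{a_nw^n+\dots+a_0}{b_mw^m+\dots+b_0}$ with coprime numerator and denominator, $m\ge\max\{n,1\}$, $a_n,b_m,b_0\neq0$). *)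

theory Defs
  imports "HOL-Complex_Analysis.Complex_Analysis" "HOL-Computational_Algebra.Polynomial"
begin

text \<open>It is a meromorphic function; as a total HOL function its values
  at zeros of the derivative are junk, which is harmless since membership in the class R
  below is tested as equality of meromorphic functions, i.e. off a discrete set.\<close>
definition newton_map :: "(complex \<Rightarrow> complex) \<Rightarrow> complex \<Rightarrow> complex" where
  "newton_map F z = z - F z / deriv F z"

text \<open>The class R_l: f(z) = l z + R(exp(2 pi i z)) with R = p/q rational, p, q coprime,
  a_n, b_m, b_0 nonzero, m \<ge> max n 1. Equality is as meromorphic functions on C,
  i.e. outside a discrete (sparse) subset of C.\<close>
definition class_R :: "int \<Rightarrow> (complex \<Rightarrow> complex) \<Rightarrow> bool" where
  "class_R l f \<longleftrightarrow>
     (\<exists>p q :: complex poly.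
        coprime p q \<and> p \<noteq> 0 \<and> q \<noteq> 0 \<and> poly q 0 \<noteq> 0 \<and>
        degree q \<ge> max (degree p) 1 \<and>
        (\<forall>\<^sub>\<approx>z. f z = of_int l * z
                      + poly p (exp (2 * pi * \<i> * z)) / poly q (exp (2 * pi * \<i> * z))))"

end

theory Submission
  imports Defs "HOL-Computational_Algebra.Fundamental_Theorem_Algebra"
    "HOL-Computational_Algebra.Polynomial_Factorial" "HOL-Computational_Algebra.Field_as_Ring"
begin

lemma cosparse_zero_imp_zero:
  fixes f :: "complex \<Rightarrow> complex"
  assumes "continuous_on UNIV f" "\<forall>\<^sub>\<approx>z. f z = 0"
  shows "f z = 0"
proof (rule ccontr)
  assume nz: "f z \<noteq> 0"
  have op: "open {z. f z \<noteq> 0}"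
    using assms(1) by (simp add: open_Collect_neq continuous_on_const)
  have sp: "{z. \<not> f z = 0} sparse_in UNIV"
    using assms(2) by (simp add: eventually_cosparse)
  have "z islimpt {z. f z \<noteq> 0}"
    using open_imp_islimpt[OF op] nz by auto
  thus False using sp by (auto simp: sparse_in_open)
qed

lemma entire_nonzero_cosparse:
  fixes f :: "complex \<Rightarrow> complex"
  assumes "f holomorphic_on UNIV" "f z0 \<noteq> 0"
  shows "\<forall>\<^sub>\<approx>z. f z \<noteq> 0"
proof -
  have "f meromorphic_on UNIV"
    using assms(1) by (simp add: analytic_on_imp_meromorphic_on analytic_on_open)
  then have "(\<forall>\<^sub>\<approx>z. f z = 0) \<or> (\<forall>\<^sub>\<approx>z. f z \<noteq> 0)"
    using meromorphic_imp_constant_or_avoid[of f UNIV 0] by auto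
  moreover have "\<not> (\<forall>\<^sub>\<approx>z. f z = 0)"
    using cosparse_zero_imp_zero[of f z0] assms holomorphic_on_imp_continuous_on by blast
  ultimately show ?thesis by blast
qed

lemma entire_cosparse_eq:
  fixes f g :: "complex \<Rightarrow> complex"
  assumes "f holomorphic_on UNIV" "g holomorphic_on UNIV" "\<forall>\<^sub>\<approx>z. f z = g z"
  shows "f z = g z"
proof -
  have "(\<lambda>z. f z - g z) z = 0"
    apply (rule cosparse_zero_imp_zero[of "\<lambda>z. f z - g z"])
    using assms by (auto intro!: holomorphic_on_imp_continuous_on holomorphic_intros elim: eventually_mono)
  thus ?thesis by simp
qed

lemma poly_exp_cosparse:
  fixes r :: "complex poly"
  assumes "r \<noteq> 0"
  shows "\<forall>\<^sub>\<approx>z. poly r (exp (2 * pi * \<i> * z)) \<noteq> 0"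
proof -
  have fin: "finite {w. poly r w = 0}" using poly_roots_finite[OF assms] .
  have "infinite (UNIV - {0::complex})" by (simp add: infinite_UNIV_char_0)
  then have "infinite ((UNIV - {0::complex}) - {w. poly r w = 0})" using fin by (meson Diff_infinite_finite)
  then obtain w where w: "w \<noteq> 0" "poly r w \<noteq> 0"
    by (metis (mono_tags, lifting) DiffE ex_in_conv finite.emptyI insertCI mem_Collect_eq)
  define z0 where "z0 = Ln w / (2 * pi * \<i>)"
  have "exp (2 * pi * \<i> * z0) = w" unfolding z0_def using w by simp
  then have "poly r (exp (2 * pi * \<i> * z0)) \<noteq> 0" using w by simp
  moreover have "(\<lambda>z. poly r (exp (2 * pi * \<i> * z))) holomorphic_on UNIV"
    by (intro holomorphic_intros)
  ultimately show ?thesis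
    using entire_nonzero_cosparse by blast
qed

lemma wronskian_const:
  fixes F T :: "complex \<Rightarrow> complex"
  assumes holF: "F holomorphic_on UNIV" and holT: "T holomorphic_on UNIV" and z1: "T z1 \<noteq> 0"
    and W: "\<And>z. deriv F z * T z = F z * deriv T z"
  shows "\<exists>\<kappa>. \<forall>z. F z = \<kappa> * T z"
proof -
  have "open {z. T z \<noteq> 0}"
    using holT by (simp add: open_Collect_neq continuous_on_const holomorphic_on_imp_continuous_on)
  then obtain e where e: "e > 0" "ball z1 e \<subseteq> {z. T z \<noteq> 0}"
    using z1 open_contains_ball by blast
  have d: "((\<lambda>z. F z / T z) has_field_derivative 0) (at x within ball z1 e)" if x: "x \<in> ball z1 e" for x
  proof -
    have Tx: "T x \<noteq> 0" using e x by auto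
    have dF: "(F has_field_derivative deriv F x) (at x)"
      by (rule holomorphic_derivI[OF holF open_UNIV]) auto
    have dT: "(T has_field_derivative deriv T x) (at x)"
      by (rule holomorphic_derivI[OF holT open_UNIV]) auto
    have "((\<lambda>z. F z / T z) has_field_derivative (deriv F x * T x - F x * deriv T x) / (T x * T x)) (at x)"
      by (rule DERIV_divide[OF dF dT Tx])
    then have "((\<lambda>z. F z / T z) has_field_derivative 0) (at x)"
      using W[of x] by simp
    then show ?thesis by (rule has_field_derivative_at_within)
  qed
  obtain c where c: "\<forall>x\<in>ball z1 e. F x / T x = c"
    using has_field_derivative_zero_constant[OF convex_ball d] by blast
  have "F z = c * T z" for z
  proof (rule analytic_continuation_open[of "ball z1 e" UNIV F "\<lambda>z. c * T z"])
    show "F z = c * T z" if z: "z \<in> ball z1 e" for z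
    proof -
      from z have "T z \<noteq> 0" "F z / T z = c" using c e by auto
      then show "F z = c * T z" by (simp add: field_simps)
    qed
    show "(\<lambda>z. c * T z) holomorphic_on UNIV" by (intro holomorphic_intros holT)
  qed (use e holF in auto)
  then show ?thesis by blast
qed

lemma residue_lemma:
  fixes F g :: "complex \<Rightarrow> complex"
  assumes holF: "F holomorphic_on UNIV" and z1: "F z1 \<noteq> 0" and z0: "F z0 = 0"
    and S: "open S" "z0 \<in> S" and holg: "g holomorphic_on S" and g0: "g z0 = 0"
    and eq: "\<And>z. z \<in> S \<Longrightarrow> F z = g z * deriv F z"
  shows "\<exists>m::nat. m > 0 \<and> of_nat m * deriv g z0 = 1"
proof -
  have nc: "\<not> F constant_on UNIV"
    using z0 z1 by (metis UNIV_I constant_on_def)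
  obtain h r n where n: "0 < n" and r: "0 < r" and holh: "h holomorphic_on ball z0 r"
    and Fh: "\<And>w. w \<in> ball z0 r \<Longrightarrow> F w = (w - z0)^n * h w"
    and hnz: "\<And>w. w \<in> ball z0 r \<Longrightarrow> h w \<noteq> 0"
    using holomorphic_factor_zero_nonconstant[OF holF open_UNIV connected_UNIV _ z0 nc] by (metis UNIV_I)
  obtain r' where r': "0 < r'" "ball z0 r' \<subseteq> S"
    using S open_contains_ball by blast
  define r2 where "r2 = min r r'"
  have r2: "0 < r2" "ball z0 r2 \<subseteq> S" "ball z0 r2 \<subseteq> ball z0 r"
    using r r' unfolding r2_def by auto
  have dF: "deriv F w = of_nat n * (w - z0)^(n-1) * h w + (w - z0)^n * deriv h w"
    if w: "w \<in> ball z0 r" for w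
  proof -
    have dh: "(h has_field_derivative deriv h w) (at w)"
      by (rule holomorphic_derivI[OF holh open_ball w])
    have "((\<lambda>w. (w - z0)^n * h w) has_field_derivative
            (of_nat n * (w - z0)^(n-1) * 1) * h w + (w - z0)^n * deriv h w) (at w)"
    proof -
      have "((\<lambda>w. (w - z0)^n) has_field_derivative of_nat n * (w - z0)^(n-1) * 1) (at w)"
        by (intro derivative_eq_intros) auto
      from DERIV_mult[OF this dh] show ?thesis by (simp add: mult.commute)
    qed
    then have "(F has_field_derivative
            (of_nat n * (w - z0)^(n-1) * 1) * h w + (w - z0)^n * deriv h w) (at w)"
      by (rule has_field_derivative_transform_within_open[of _ _ _ "ball z0 r"]) (use w Fh in auto)
    then show ?thesis by (simp add: DERIV_imp_deriv)
  qed
  obtain k where k: "n = Suc k" using n by (cases n) auto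
  have key: "h w = g w / (w - z0) * (of_nat n * h w + (w - z0) * deriv h w)"
    if w: "w \<in> ball z0 r2" "w \<noteq> z0" for w
  proof -
    have wS: "w \<in> S" "w \<in> ball z0 r" using w r2 by auto
    have "(w - z0)^n * h w = g w * (of_nat n * (w - z0)^(n-1) * h w + (w - z0)^n * deriv h w)"
      using eq[OF wS(1)] Fh[OF wS(2)] dF[OF wS(2)] by simp
    then have "(w - z0)^k * ((w - z0) * h w) = (w - z0)^k * (g w * (of_nat n * h w + (w - z0) * deriv h w))"
      unfolding k by (simp add: algebra_simps)
    then have "(w - z0) * h w = g w * (of_nat n * h w + (w - z0) * deriv h w)"
      using w(2) by simp
    then show ?thesis using w(2) by (simp add: field_simps)
  qed
  have dg: "(g has_field_derivative deriv g z0) (at z0)"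
    by (rule holomorphic_derivI[OF holg S])
  have lim1: "((\<lambda>w. g w / (w - z0)) \<longlongrightarrow> deriv g z0) (at z0)"
    using dg g0 by (simp add: has_field_derivative_iff)
  have ch: "isCont h z0"
    using holh r by (meson centre_in_ball continuous_on_eq_continuous_at holomorphic_on_imp_continuous_on open_ball)
  have cdh: "isCont (deriv h) z0"
    using holh r by (meson centre_in_ball continuous_on_eq_continuous_at holomorphic_deriv holomorphic_on_imp_continuous_on open_ball)
  have lim2: "((\<lambda>w. g w / (w - z0) * (of_nat n * h w + (w - z0) * deriv h w)) \<longlongrightarrow>
      deriv g z0 * (of_nat n * h z0 + (z0 - z0) * deriv h z0)) (at z0)"
    by (intro tendsto_mult tendsto_add tendsto_const lim1 tendsto_diff tendsto_ident_at
        isCont_tendsto_compose[OF ch] isCont_tendsto_compose[OF cdh])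
  have ev: "\<forall>\<^sub>F w in at z0. h w = g w / (w - z0) * (of_nat n * h w + (w - z0) * deriv h w)"
    unfolding eventually_at using r2 key by (auto simp: dist_commute intro!: exI[of _ r2])
  have lim3: "(h \<longlongrightarrow> deriv g z0 * (of_nat n * h z0 + (z0 - z0) * deriv h z0)) (at z0)"
    using tendsto_cong[OF ev] lim2 by simp
  have "h z0 = deriv g z0 * (of_nat n * h z0 + (z0 - z0) * deriv h z0)"
    using tendsto_unique[OF _ isCont_tendsto_compose[OF ch tendsto_ident_at] lim3] by simp
  then have "h z0 * (of_nat n * deriv g z0 - 1) = 0" by (simp add: algebra_simps)
  then have "of_nat n * deriv g z0 = 1" using hnz[of z0] r by simp
  then show ?thesis using n by blast
qed

lemma F_deriv_formula:
  fixes P Q Qt :: "complex poly" and L1 :: complex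
  defines "\<omega> \<equiv> 2 * pi * \<i>"
  defines "E \<equiv> (\<lambda>z. L1 * z + poly Q (exp (\<omega> * z)) + poly Qt (exp (- (\<omega> * z))))"
  shows "((\<lambda>z. exp (E z) * poly P (exp (\<omega> * z))) has_field_derivative
     exp (E z) * ((L1 + poly (pderiv Q) (exp (\<omega> * z)) * (\<omega> * exp (\<omega> * z))
        - poly (pderiv Qt) (exp (- (\<omega> * z))) * (\<omega> * exp (- (\<omega> * z)))) * poly P (exp (\<omega> * z))
        + poly (pderiv P) (exp (\<omega> * z)) * (\<omega> * exp (\<omega> * z)))) (at z)"
  unfolding E_def
  apply (rule derivative_eq_intros refl poly_DERIV[THEN DERIV_chain2] | simp)+
  apply (simp add: algebra_simps)
  done

lemma backward:
  fixes F :: "complex \<Rightarrow> complex" and \<Lambda> :: complex and m0 :: int and P Q Qt :: "complex poly"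
  assumes P0: "poly P 0 \<noteq> 0" and Proot: "\<exists>w. w \<noteq> 0 \<and> poly P w = 0"
    and cQ: "degree Q = 0 \<longrightarrow> \<Lambda> \<noteq> - 2 * pi * \<i> * (of_int m0 + of_nat (degree P))"
    and cQt: "degree Qt = 0 \<longrightarrow> \<Lambda> \<noteq> - 2 * pi * \<i> * of_int m0"
    and Fdef: "\<forall>z. F z = exp (\<Lambda> * z) *
           (let w = exp (2 * pi * \<i> * z) in
              w powi m0 * poly P w * exp (poly Q w + poly Qt (1 / w)))"
  shows "class_R 1 (newton_map F)"
proof -
  define \<omega> where "\<omega> = 2 * pi * \<i>"
  have \<omega>0: "\<omega> \<noteq> 0" unfolding \<omega>_def by simp
  define L1 where "L1 = \<Lambda> + \<omega> * of_int m0"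
  define E where "E = (\<lambda>z. L1 * z + poly Q (exp (\<omega> * z)) + poly Qt (exp (- (\<omega> * z))))"
  have Fe: "F z = exp (E z) * poly P (exp (\<omega> * z))" for z
  proof -
    have "exp (\<omega> * z) powi m0 = exp (of_int m0 * (\<omega> * z))" by (rule exp_power_int)
    moreover have "1 / exp (\<omega> * z) = exp (- (\<omega> * z))" by (simp add: exp_minus field_simps)
    ultimately show ?thesis
      using Fdef unfolding E_def L1_def \<omega>_def Let_def
      by (simp add: exp_add[symmetric] algebra_simps)
  qed
  have Ffun: "F = (\<lambda>z. exp (E z) * poly P (exp (\<omega> * z)))" using Fe by auto
  define k where "k = degree Qt"
  define n where "n = degree P"
  define d where "d = degree Q"
  define B where "B = monom 1 k * P"
  define A where "A = smult L1 (monom 1 k * P) + smult \<omega> (monom 1 (k+1) * pderiv P)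
      + smult \<omega> (monom 1 (k+1) * (pderiv Q * P)) - smult \<omega> (P * reflect_poly (pderiv Qt))"
  have dF: "deriv F z * exp (\<omega> * z) ^ k = exp (E z) * poly A (exp (\<omega> * z))" for z
  proof -
    define w where "w = exp (\<omega> * z)"
    have w0: "w \<noteq> 0" unfolding w_def by simp
    have ew: "exp (- (\<omega> * z)) = inverse w" unfolding w_def by (simp add: exp_minus)
    have dFz: "deriv F z = exp (E z) * ((L1 + poly (pderiv Q) w * (\<omega> * w)
        - poly (pderiv Qt) (inverse w) * (\<omega> * inverse w)) * poly P w
        + poly (pderiv P) w * (\<omega> * w))"
      unfolding Ffun using F_deriv_formula[of L1 Q Qt P z] unfolding E_def \<omega>_def w_def ew[unfolded w_def \<omega>_def]
      by (simp add: DERIV_imp_deriv)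
    have refl: "poly (reflect_poly (pderiv Qt)) w = w ^ k * (poly (pderiv Qt) (inverse w) * inverse w)"
    proof (cases "k = 0")
      case True
      then have "pderiv Qt = 0" unfolding k_def by (simp add: pderiv_eq_0_iff)
      then show ?thesis by simp
    next
      case False
      then have dg: "degree (pderiv Qt) = k - 1" unfolding k_def by (simp add: degree_pderiv)
      have wk: "w ^ k = w ^ (k - 1) * w" using False by (cases k) auto
      have "poly (reflect_poly (pderiv Qt)) w = w ^ (k - 1) * poly (pderiv Qt) (inverse w)"
        using poly_reflect_poly_nz[OF w0, of "pderiv Qt"] dg by simp
      also have "\<dots> = w ^ k * (poly (pderiv Qt) (inverse w) * inverse w)"
        unfolding wk using w0 by simp
      finally show ?thesis .
    qed
    have pA: "poly A w = L1 * (w ^ k * poly P w) + \<omega> * (w ^ (k+1) * poly (pderiv P) w)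
        + \<omega> * (w ^ (k+1) * (poly (pderiv Q) w * poly P w))
        - \<omega> * (poly P w * poly (reflect_poly (pderiv Qt)) w)"
      unfolding A_def by (simp add: poly_monom)
    show ?thesis
      unfolding w_def[symmetric] dFz pA refl
      by (simp add: algebra_simps)
  qed
  have Pnz: "P \<noteq> 0" using P0 by auto
  have n1: "n \<ge> 1"
  proof (rule ccontr)
    assume "\<not> n \<ge> 1"
    then have "degree P = 0" unfolding n_def by simp
    then obtain c where "P = [:c:]" by (rule degree_eq_zeroE)
    then show False using Proot P0 by auto
  qed
  have L1nz: "L1 \<noteq> 0" if "k = 0"
  proof
    assume "L1 = 0"
    moreover have "\<Lambda> = L1 - \<omega> * of_int m0" unfolding L1_def by simp
    ultimately have "\<Lambda> = - (\<omega> * of_int m0)" by simp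
    then show False using cQt that unfolding k_def \<omega>_def by simp
  qed
  have A0: "poly A 0 \<noteq> 0"
  proof (cases "k = 0")
    case True
    then have "pderiv Qt = 0" unfolding k_def by (simp add: pderiv_eq_0_iff)
    then have "poly A 0 = L1 * poly P 0" unfolding A_def using True by (simp add: poly_monom)
    then show ?thesis using L1nz[OF True] P0 by simp
  next
    case False
    then have "pderiv Qt \<noteq> 0" unfolding k_def by (simp add: pderiv_eq_0_iff)
    moreover have "poly A 0 = - (\<omega> * (poly P 0 * lead_coeff (pderiv Qt)))"
      unfolding A_def using False by (simp add: poly_monom poly_0_coeff_0 coeff_monom_mult coeff_mult_0)
    ultimately show ?thesis using P0 \<omega>0 by simp
  qed
  have Anz: "A \<noteq> 0" using A0 by auto
  have degA: "k + n \<le> degree A"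
  proof (cases "d = 0")
    case True
    then have pQ: "pderiv Q = 0" unfolding d_def by (simp add: pderiv_eq_0_iff)
    have c1: "coeff (monom 1 k * P) (k + n) = lead_coeff P" by (simp add: coeff_monom_mult n_def)
    have c2: "coeff (monom 1 (k+1) * pderiv P) (k + n) = of_nat n * lead_coeff P"
    proof -
      have "coeff (monom 1 (k+1) * pderiv P) (k + n) = coeff (pderiv P) (n - 1)"
        using n1 by (simp add: coeff_monom_mult)
      also have "\<dots> = of_nat n * lead_coeff P"
        using n1 unfolding coeff_pderiv n_def by simp
      finally show ?thesis .
    qed
    have c3: "coeff (P * reflect_poly (pderiv Qt)) (k + n) = 0"
    proof (cases "k = 0")
      case True
      then have "pderiv Qt = 0" unfolding k_def by (simp add: pderiv_eq_0_iff)
      then show ?thesis by simp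
    next
      case k0: False
      show ?thesis
      proof (rule coeff_eq_0)
      have "degree (P * reflect_poly (pderiv Qt)) \<le> n + degree (reflect_poly (pderiv Qt))"
        unfolding n_def by (rule degree_mult_le)
      also have "\<dots> \<le> n + degree (pderiv Qt)" using degree_reflect_poly_le by simp
      also have "\<dots> = n + (k - 1)" unfolding k_def by (simp add: degree_pderiv)
      finally show "degree (P * reflect_poly (pderiv Qt)) < k + n" using n1 k0 by linarith
    qed
    qed
    have "coeff A (k + n) = lead_coeff P * (L1 + \<omega> * of_nat n)"
      unfolding A_def coeff_add coeff_diff coeff_smult c1 c2 c3 pQ by (simp add: algebra_simps)
    moreover have "L1 + \<omega> * of_nat n \<noteq> 0"
    proof
      assume "L1 + \<omega> * of_nat n = 0"
      moreover have "\<Lambda> = (L1 + \<omega> * of_nat n) - \<omega> * (of_int m0 + of_nat n)" unfolding L1_def by (simp add: algebra_simps)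
      ultimately have "\<Lambda> = - (\<omega> * (of_int m0 + of_nat n))" by simp
      then show False using cQ True unfolding d_def \<omega>_def n_def by simp
    qed
    ultimately have "coeff A (k + n) \<noteq> 0" using Pnz by simp
    then show ?thesis by (rule le_degree)
  next
    case False
    have c1: "coeff (monom 1 k * P) (k + n + d) = 0"
      using False by (simp add: coeff_monom_mult n_def coeff_eq_0)
    have c2: "coeff (monom 1 (k+1) * pderiv P) (k + n + d) = 0"
    proof -
      have "coeff (monom 1 (k+1) * pderiv P) (k + n + d) = coeff (pderiv P) (n + d - 1)"
        using n1 by (simp add: coeff_monom_mult)
      also have "\<dots> = 0"
        using n1 False by (intro coeff_eq_0) (simp add: degree_pderiv n_def)
      finally show ?thesis .
    qed
    have pQnz: "pderiv Q \<noteq> 0" using False unfolding d_def by (simp add: pderiv_eq_0_iff)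
    have dpQ: "degree (pderiv Q) = d - 1" unfolding d_def by (simp add: degree_pderiv)
    have c3: "coeff (monom 1 (k+1) * (pderiv Q * P)) (k + n + d) = of_nat d * lead_coeff Q * lead_coeff P"
    proof -
      have "coeff (monom 1 (k+1) * (pderiv Q * P)) (k + n + d) = coeff (pderiv Q * P) (n + d - 1)"
        using n1 by (simp add: coeff_monom_mult)
      also have "n + d - 1 = degree (pderiv Q * P)"
        using degree_mult_eq[OF pQnz Pnz] dpQ False n_def by simp
      also have "coeff (pderiv Q * P) (degree (pderiv Q * P)) = lead_coeff (pderiv Q) * lead_coeff P"
        by (rule lead_coeff_mult)
      also have "lead_coeff (pderiv Q) = of_nat d * lead_coeff Q"
        unfolding dpQ coeff_pderiv using False d_def by simp
      finally show ?thesis .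
    qed
    have c4: "coeff (P * reflect_poly (pderiv Qt)) (k + n + d) = 0"
    proof (rule coeff_eq_0)
      have "degree (P * reflect_poly (pderiv Qt)) \<le> n + degree (reflect_poly (pderiv Qt))"
        unfolding n_def by (rule degree_mult_le)
      also have "\<dots> \<le> n + degree (pderiv Qt)" using degree_reflect_poly_le by simp
      also have "\<dots> = n + (k - 1)" unfolding k_def by (simp add: degree_pderiv)
      finally show "degree (P * reflect_poly (pderiv Qt)) < k + n + d" using n1 False by linarith
    qed
    have "coeff A (k + n + d) = \<omega> * (of_nat d * lead_coeff Q * lead_coeff P)"
      unfolding A_def coeff_add coeff_diff coeff_smult c1 c2 c3 c4 by simp
    moreover have "lead_coeff Q \<noteq> 0" using False d_def by auto
    ultimately have "coeff A (k + n + d) \<noteq> 0" using Pnz \<omega>0 False by simp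
    then have "k + n + d \<le> degree A" by (rule le_degree)
    then show ?thesis by simp
  qed
  have Bnz: "B \<noteq> 0" unfolding B_def using Pnz by (simp add: monom_eq_0_iff)
  have degB: "degree B = k + n" unfolding B_def n_def using Pnz
    by (simp add: degree_mult_eq monom_eq_0_iff degree_monom_eq)
  define G where "G = gcd B A"
  define p where "p = - (B div G)"
  define q where "q = A div G"
  have BG: "B = (B div G) * G" unfolding G_def by simp
  have AG: "A = q * G" unfolding G_def q_def by simp
  have Gnz: "G \<noteq> 0" unfolding G_def using Bnz by simp
  have cop: "coprime p q" unfolding p_def q_def G_def using div_gcd_coprime[of B A] Bnz by simp
  have BGnz: "B div G \<noteq> 0" using BG Bnz by auto
  have pnz: "p \<noteq> 0" unfolding p_def using BGnz by simp
  have qnz: "q \<noteq> 0" using AG Anz by auto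
  have q0: "poly q 0 \<noteq> 0" using A0 AG by auto
  have dB: "degree B = degree (B div G) + degree G" using BG BGnz Gnz degree_mult_eq by metis
  have dA: "degree A = degree q + degree G" using AG qnz Gnz degree_mult_eq by metis
  have dpq: "degree p \<le> degree q" unfolding p_def using dB dA degA degB by simp
  have Bq: "B * q = - (p * A)" unfolding p_def
  proof -
    have "B * q = (B div G) * (q * G)" by (subst BG) (simp add: algebra_simps)
    then show "B * q = - (- (B div G) * A)" using AG by simp
  qed
  have dq1: "degree q \<ge> 1"
  proof (rule ccontr)
    assume "\<not> degree q \<ge> 1"
    then have "degree q = 0" by simp
    then obtain q0 where q0def: "q = [:q0:]" by (rule degree_eq_zeroE)
    have q0nz: "q0 \<noteq> 0" using qnz q0def by simp
    have "smult q0 B = (B div G) * A" using Bq q0def unfolding p_def by (simp add: algebra_simps)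
    then have "A dvd smult q0 B" by (metis dvd_triv_right)
    then have "A dvd B" using q0nz by (rule dvd_smult_cancel)
    then obtain r where r: "B = A * r" by (rule dvdE)
    have rnz: "r \<noteq> 0" using r Bnz by auto
    have "degree B = degree A + degree r" using r Anz rnz degree_mult_eq by metis
    then have "degree r = 0" using degA degB by simp
    then obtain r0 where r0: "r = [:r0:]" by (rule degree_eq_zeroE)
    have r0nz: "r0 \<noteq> 0" using rnz r0 by simp
    have Aeq: "A = smult (inverse r0) B" using r r0 r0nz by simp
    have "smult \<omega> (monom 1 (k+1) * pderiv P) = A - smult L1 (monom 1 k * P)
        - smult \<omega> (monom 1 (k+1) * (pderiv Q * P)) + smult \<omega> (P * reflect_poly (pderiv Qt))"
      unfolding A_def by (simp add: algebra_simps)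
    also have "P dvd \<dots>" unfolding Aeq B_def
      by (intro dvd_add dvd_diff dvd_smult dvd_mult dvd_mult2 dvd_refl)
    finally have "P dvd smult \<omega> (monom 1 (k+1) * pderiv P)" .
    then have "P dvd [:0,1:] ^ (k+1) * pderiv P" using \<omega>0
      by (simp add: monom_altdef dvd_smult_cancel)
    moreover have "coprime P ([:0,1:] ^ (k+1))"
    proof -
      have "prime_elem [:0::complex,1:]" by (rule prime_elem_linear_field_poly) simp
      moreover have "\<not> [:0,1:] dvd P" using P0 poly_eq_0_iff_dvd[of P 0] by simp
      ultimately have "coprime [:0,1:] P" by (rule prime_elem_imp_coprime)
      then show ?thesis by (metis coprime_power_right_iff coprime_commute)
    qed
    ultimately have "P dvd pderiv P" using coprime_dvd_mult_right_iff by blast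
    moreover have "pderiv P \<noteq> 0" using n1 unfolding n_def by (simp add: pderiv_eq_0_iff)
    ultimately have "degree P \<le> degree (pderiv P)" by (rule dvd_imp_degree_le)
    then show False using n1 unfolding n_def by (simp add: degree_pderiv)
  qed
  have ev: "\<forall>\<^sub>\<approx>z. poly A (exp (2 * pi * \<i> * z)) \<noteq> 0 \<and> poly q (exp (2 * pi * \<i> * z)) \<noteq> 0"
    using poly_exp_cosparse[OF Anz] poly_exp_cosparse[OF qnz] by (rule eventually_conj)
  have "\<forall>\<^sub>\<approx>z. newton_map F z = of_int 1 * z
                      + poly p (exp (2 * pi * \<i> * z)) / poly q (exp (2 * pi * \<i> * z))"
  proof (rule eventually_mono[OF ev])
    fix z assume Az: "poly A (exp (2 * pi * \<i> * z)) \<noteq> 0 \<and> poly q (exp (2 * pi * \<i> * z)) \<noteq> 0"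
    define w where "w = exp (\<omega> * z)"
    have w0: "w \<noteq> 0" unfolding w_def by simp
    have Aw: "poly A w \<noteq> 0" and qw: "poly q w \<noteq> 0" using Az unfolding w_def \<omega>_def by auto
    have d1: "deriv F z = exp (E z) * poly A w / w ^ k"
      using dF[of z] w0 unfolding w_def[symmetric] by (simp add: field_simps)
    have f1: "F z / deriv F z = poly B w / poly A w"
      unfolding d1 Fe w_def[symmetric] B_def using w0 Aw by (simp add: poly_monom field_simps)
    have "poly B w * poly q w = - (poly p w * poly A w)" using arg_cong[OF Bq, of "\<lambda>x. poly x w"] by simp
    then have f2: "poly B w / poly A w = - (poly p w / poly q w)" using Aw qw by (simp add: field_simps)
    show "newton_map F z = of_int 1 * z + poly p (exp (2 * pi * \<i> * z)) / poly q (exp (2 * pi * \<i> * z))"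
      unfolding newton_map_def f1 f2 w_def[symmetric, unfolded \<omega>_def] by simp
  qed
  then show ?thesis unfolding class_R_def
    using cop pnz qnz q0 dpq dq1 by (intro exI[of _ p] exI[of _ q]) auto
qed

lemma coprime_no_common_root:
  fixes p q :: "complex poly"
  assumes "coprime p q" "poly p b = 0" "poly q b = 0"
  shows False
proof -
  have "[:-b,1:] dvd p" "[:-b,1:] dvd q" using assms poly_eq_0_iff_dvd by blast+
  then have "is_unit [:-b,1:]" using assms(1) by (meson coprime_common_divisor)
  then show False by (simp add: is_unit_poly_iff)
qed

lemma big_derivative:
  fixes p q :: "complex poly" and b c :: complex
  assumes qb: "poly q b = 0" and pb: "poly p b \<noteq> 0" and qnz: "q \<noteq> 0" and b0: "b \<noteq> 0"
  shows "\<forall>\<^sub>F w in at b. poly q w \<noteq> 0 \<and>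
           1 < norm (c - deriv (\<lambda>w. poly p w / poly q w) w * (2 * pi * \<i> * w))"
proof -
  define \<omega> :: complex where "\<omega> = 2 * pi * \<i>"
  define d where "d = order b q"
  have d1: "d \<ge> 1" using qb qnz order_root[of q b] unfolding d_def by auto
  obtain q2 where q2: "q = [:-b,1:] ^ d * q2" "\<not> [:-b,1:] dvd q2"
    using order_decomp[OF qnz, of b] unfolding d_def by blast
  have q2b: "poly q2 b \<noteq> 0" using q2(2) poly_eq_0_iff_dvd by blast
  obtain d' where d': "d = Suc d'" using d1 by (cases d) auto
  have pq: "poly q w = (w - b) ^ d * poly q2 w" for w
    using q2(1) by (simp add: poly_power)
  have dq: "poly (pderiv q) w = of_nat d * (w - b) ^ (d - 1) * poly q2 w + (w - b) ^ d * poly (pderiv q2) w" for w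
  proof -
    have "((\<lambda>w. (w - b) ^ d * poly q2 w) has_field_derivative
           of_nat d * (w - b) ^ (d - 1) * 1 * poly q2 w + (w - b) ^ d * poly (pderiv q2) w) (at w)"
      by (intro DERIV_mult poly_DERIV derivative_eq_intros DERIV_power) auto
    moreover have "((\<lambda>w. (w - b) ^ d * poly q2 w) has_field_derivative poly (pderiv q) w) (at w)"
      using poly_DERIV[of q w] unfolding pq .
    ultimately show ?thesis using DERIV_unique by fastforce
  qed
  define N where "N = (\<lambda>w. (w - b) * (poly (pderiv p) w * poly q2 w - poly p w * poly (pderiv q2) w)
                      - of_nat d * poly p w * poly q2 w)"
  define D where "D = (\<lambda>w. (w - b) ^ (d + 1) * poly q2 w ^ 2)"
  have ev_q2: "\<forall>\<^sub>F w in at b. poly q2 w \<noteq> 0"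
  proof -
    have "(poly q2 \<longlongrightarrow> poly q2 b) (at b)" by (intro tendsto_intros)
    then show ?thesis using q2b tendsto_imp_eventually_ne by blast
  qed
  have ev_nb: "\<forall>\<^sub>F w in at b. w \<noteq> b" by (auto simp: eventually_at intro!: exI[of _ 1])
  have ev_eq: "\<forall>\<^sub>F w in at b. deriv (\<lambda>w. poly p w / poly q w) w = N w / D w"
    using ev_q2 ev_nb
  proof eventually_elim
    case (elim w)
    have qw: "poly q w \<noteq> 0" using elim pq by simp
    have "((\<lambda>w. poly p w / poly q w) has_field_derivative
        (poly (pderiv p) w * poly q w - poly p w * poly (pderiv q) w) / (poly q w * poly q w)) (at w)"
      by (intro DERIV_divide poly_DERIV qw)
    then have "deriv (\<lambda>w. poly p w / poly q w) w =
        (poly (pderiv p) w * poly q w - poly p w * poly (pderiv q) w) / (poly q w * poly q w)"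
      by (rule DERIV_imp_deriv)
    also have "\<dots> = ((w - b) ^ d' * N w) / ((w - b) ^ d' * D w)"
    proof -
      have "poly (pderiv p) w * poly q w - poly p w * poly (pderiv q) w = (w - b) ^ d' * N w"
        unfolding dq pq N_def d' by (simp add: algebra_simps)
      moreover have "poly q w * poly q w = (w - b) ^ d' * D w"
        unfolding pq D_def d' by (simp add: algebra_simps power2_eq_square)
      ultimately show ?thesis by simp
    qed
    also have "\<dots> = N w / D w" using elim by simp
    finally show ?case .
  qed
  have limN: "(N \<longlongrightarrow> - (of_nat d * poly p b * poly q2 b)) (at b)"
  proof -
    have "isCont N b" unfolding N_def by (intro continuous_intros)
    then show ?thesis unfolding isCont_def N_def by simp
  qed
  have limD: "filterlim D (at 0) (at b)"
  proof (rule filterlim_atI)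
    have "isCont D b" unfolding D_def by (intro continuous_intros)
    then show "(D \<longlongrightarrow> 0) (at b)" unfolding isCont_def D_def by simp
    show "\<forall>\<^sub>F w in at b. D w \<noteq> 0" using ev_q2 ev_nb by eventually_elim (simp add: D_def)
  qed
  have "filterlim (\<lambda>w. N w / D w) at_infinity (at b)"
    by (rule filterlim_divide_at_infinity[OF limN limD]) (use pb q2b d1 in simp)
  then have inf1: "filterlim (deriv (\<lambda>w. poly p w / poly q w)) at_infinity (at b)"
    using filterlim_cong[OF refl refl ev_eq] by simp
  have "((\<lambda>w. \<omega> * w) \<longlongrightarrow> \<omega> * b) (at b)" by (intro tendsto_intros)
  then have inf2: "filterlim (\<lambda>w. \<omega> * w * deriv (\<lambda>w. poly p w / poly q w) w) at_infinity (at b)"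
    by (rule tendsto_mult_filterlim_at_infinity) (use b0 inf1 in \<open>auto simp: \<omega>_def\<close>)
  have "\<forall>\<^sub>F w in at b. 2 + norm c \<le> norm (\<omega> * w * deriv (\<lambda>w. poly p w / poly q w) w)"
    using inf2 filterlim_at_infinity[of 0] by (metis add_pos_nonneg norm_ge_zero zero_less_numeral order.refl)
  then show ?thesis using ev_q2 ev_nb
  proof eventually_elim
    case (elim w)
    have "norm (\<omega> * w * deriv (\<lambda>w. poly p w / poly q w) w) \<le>
          norm (c - deriv (\<lambda>w. poly p w / poly q w) w * (\<omega> * w)) + norm c"
      by (metis (no_types, lifting) add.commute mult.commute norm_minus_commute norm_triangle_sub)
    then show ?case using elim pq unfolding \<omega>_def by simp
  qed
qed

lemma hits_large_values:
  fixes p q :: "complex poly" and b :: complex and \<epsilon> :: real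
  assumes qb: "poly q b = 0" and pb: "poly p b \<noteq> 0" and ev: "\<forall>\<^sub>F w in at b. poly q w \<noteq> 0"
    and e: "\<epsilon> > 0"
  shows "\<exists>T. \<forall>t. norm t > T \<longrightarrow> (\<exists>w. w \<noteq> b \<and> dist w b < \<epsilon> \<and> poly q w \<noteq> 0 \<and> poly p w / poly q w = t)"
proof -
  have "open {w. poly p w \<noteq> 0}"
    by (intro open_Collect_neq continuous_intros)
  then obtain \<rho> where \<rho>: "\<rho> > 0" "ball b \<rho> \<subseteq> {w. poly p w \<noteq> 0}"
    using pb open_contains_ball by blast
  define \<psi> where "\<psi> = (\<lambda>w. poly q w / poly p w)"
  have hol: "\<psi> holomorphic_on ball b \<rho>" unfolding \<psi>_def using \<rho> by (intro holomorphic_intros) auto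
  obtain \<delta>0 where \<delta>0: "\<delta>0 > 0" "\<And>w. w \<noteq> b \<Longrightarrow> dist w b < \<delta>0 \<Longrightarrow> poly q w \<noteq> 0"
    using ev unfolding eventually_at by blast
  define w1 where "w1 = b + of_real (min \<delta>0 \<rho> / 2)"
  have w1: "w1 \<noteq> b" "dist w1 b < \<delta>0" "dist w1 b < \<rho>"
    unfolding w1_def using \<delta>0 \<rho> by (auto simp: dist_norm)
  have nc: "\<not> \<psi> constant_on ball b \<rho>"
  proof
    assume "\<psi> constant_on ball b \<rho>"
    then have "\<psi> w1 = \<psi> b" using w1 \<rho> unfolding constant_on_def by (auto simp: dist_commute)
    moreover have "\<psi> w1 \<noteq> 0" unfolding \<psi>_def using \<delta>0(2)[OF w1(1,2)] w1(3) \<rho> by (auto simp: dist_commute)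
    ultimately show False unfolding \<psi>_def using qb by simp
  qed
  define U where "U = ball b (min \<epsilon> \<rho>)"
  have "open (\<psi> ` U)"
    by (rule open_mapping_thm[OF hol open_ball connected_ball _ _ nc]) (auto simp: U_def)
  moreover have "0 \<in> \<psi> ` U" unfolding U_def \<psi>_def using qb e \<rho> by (auto intro!: image_eqI[of _ _ b])
  ultimately obtain \<delta> where \<delta>: "\<delta> > 0" "ball 0 \<delta> \<subseteq> \<psi> ` U" using open_contains_ball by blast
  show ?thesis
  proof (intro exI[of _ "1 / \<delta>"] allI impI)
    fix t :: complex assume t: "norm t > 1 / \<delta>"
    then have t0: "t \<noteq> 0" using \<delta> by auto
    have "norm (1 / t) < \<delta>" using t \<delta> t0 by (simp add: norm_divide field_simps)
    then have "1 / t \<in> \<psi> ` U" using \<delta> by auto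
    then obtain w where w: "w \<in> U" "\<psi> w = 1 / t" by auto
    have pw: "poly p w \<noteq> 0" using w(1) \<rho> unfolding U_def by auto
    have qw: "poly q w \<noteq> 0" using w(2) t0 unfolding \<psi>_def by auto
    have "w \<noteq> b" using qw qb by auto
    moreover have "dist w b < \<epsilon>" using w(1) unfolding U_def by (auto simp: dist_commute)
    moreover have "poly p w / poly q w = t" using w(2) pw qw t0 unfolding \<psi>_def by (simp add: field_simps)
    ultimately show "\<exists>w. w \<noteq> b \<and> dist w b < \<epsilon> \<and> poly q w \<noteq> 0 \<and> poly p w / poly q w = t"
      using qw by blast
  qed
qed

lemma sum4_bound:
  fixes a1 a2 a3 a4 :: complex
  assumes "norm a1 < \<eta>" "norm a2 < \<eta>" "norm a3 < \<eta>" "norm a4 < \<eta>"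
  shows "norm (a1 + a2 + a3 + a4) < 4 * \<eta>"
proof -
  have "norm (a1 + a2 + a3 + a4) \<le> norm (a1 + a2 + a3) + norm a4" by (rule norm_triangle_ineq)
  also have "\<dots> \<le> norm (a1 + a2) + norm a3 + norm a4" using norm_triangle_ineq[of "a1 + a2" a3] by simp
  also have "\<dots> \<le> norm a1 + norm a2 + norm a3 + norm a4" using norm_triangle_ineq[of a1 a2] by simp
  finally show ?thesis using assms by simp
qed

lemma picard_solution:
  fixes p q :: "complex poly" and b c :: complex and r :: real
  assumes qb: "poly q b = 0" and pb: "poly p b \<noteq> 0" and ev: "\<forall>\<^sub>F w in at b. poly q w \<noteq> 0"
    and b0: "b \<noteq> 0" and c0: "c \<noteq> 0" and r: "r > 0"
  shows "\<exists>w. w \<noteq> b \<and> dist w b < r \<and> poly q w \<noteq> 0 \<and>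
             exp (2 * pi * \<i> * (poly p w / poly q w) / c) = w"
proof (rule ccontr)
  assume contra: "\<not> ?thesis"
  define \<omega> :: complex where "\<omega> = 2 * pi * \<i>"
  obtain \<delta>0 where \<delta>0: "\<delta>0 > 0" "\<And>w. w \<noteq> b \<Longrightarrow> dist w b < \<delta>0 \<Longrightarrow> poly q w \<noteq> 0"
    using ev unfolding eventually_at by blast
  define r2 where "r2 = min r (min \<delta>0 (norm b))"
  have r2: "r2 > 0" unfolding r2_def using r \<delta>0 b0 by simp
  define K where "K = (\<lambda>w. exp (\<omega> * (poly p w / poly q w) / c) / w)"
  have inM: "poly q w \<noteq> 0 \<and> w \<noteq> 0 \<and> dist w b < r" if "w \<in> ball b r2 - {b}" for w
  proof -
    have "dist w b < r2" using that by (auto simp: dist_commute)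
    then have "dist w b < \<delta>0" "dist w b < norm b" "dist w b < r" unfolding r2_def by auto
    moreover have "w \<noteq> b" using that by auto
    ultimately show ?thesis using \<delta>0(2) by (auto simp: dist_norm)
  qed
  have hol: "K holomorphic_on (ball b r2 - {b})"
    unfolding K_def using inM by (intro holomorphic_intros) auto
  have avoid: "K w \<noteq> 0 \<and> K w \<noteq> 1" if "w \<in> ball b r2 - {b}" for w
  proof -
    have "w \<noteq> 0" using inM[OF that] by auto
    moreover have "exp (\<omega> * (poly p w / poly q w) / c) \<noteq> w"
      using contra inM[OF that] that unfolding \<omega>_def by auto
    ultimately show ?thesis unfolding K_def by auto
  qed
  obtain l where l: "(K \<longlongrightarrow> l) (at b) \<or> ((inverse \<circ> K) \<longlongrightarrow> l) (at b)"
    using great_Picard[OF open_ball centre_in_ball[THEN iffD2, OF r2] zero_neq_one hol] avoid by blast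
  have hit: "\<exists>w1 w2. w1 \<noteq> b \<and> dist w1 b < \<epsilon> \<and> w2 \<noteq> b \<and> dist w2 b < \<epsilon> \<and> K w1 = 1 / w1 \<and> K w2 = - 1 / w2"
    if e: "\<epsilon> > 0" for \<epsilon>
  proof -
    obtain T where T: "\<And>t. norm t > T \<Longrightarrow> \<exists>w. w \<noteq> b \<and> dist w b < \<epsilon> \<and> poly q w \<noteq> 0 \<and> poly p w / poly q w = t"
      using hits_large_values[OF qb pb ev e] by blast
    obtain N :: nat where N: "T / norm c < of_nat N" using reals_Archimedean2 by blast
    have nc0: "norm c > 0" using c0 by simp
    have TN: "T < norm c * of_nat N" using N pos_divide_less_eq[OF nc0] by (simp add: mult.commute)
    have "norm (c * of_nat N) > T" using TN by (simp add: norm_mult)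
    then obtain w1 where w1: "w1 \<noteq> b" "dist w1 b < \<epsilon>" "poly p w1 / poly q w1 = c * of_nat N"
      using T by blast
    have h: "(of_nat N + 1/2 :: complex) = of_real (real N + 1/2)" by simp
    have "norm (c * (of_nat N + 1/2)) = norm c * (real N + 1/2)"
      unfolding h norm_mult norm_of_real by simp
    also have "\<dots> \<ge> norm c * real N" using nc0 by (simp add: mult_left_mono)
    finally have "norm (c * (of_nat N + 1/2)) > T" using TN by linarith
    then obtain w2 where w2: "w2 \<noteq> b" "dist w2 b < \<epsilon>" "poly p w2 / poly q w2 = c * (of_nat N + 1/2)"
      using T by blast
    have eo: "exp \<omega> = 1" unfolding \<omega>_def using exp_two_pi_i by simp
    have eN: "exp (\<omega> * of_nat N) = 1"
      using exp_of_nat_mult[of N \<omega>] eo by (simp add: mult.commute)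
    have "K w1 = exp (\<omega> * of_nat N) / w1" unfolding K_def w1(3) using c0 by simp
    then have K1: "K w1 = 1 / w1" using eN by simp
    have "\<omega> * (c * (of_nat N + 1/2)) / c = \<omega> * (of_nat N + 1/2)" using c0 by simp
    also have "\<dots> = \<omega> * of_nat N + of_real pi * \<i>" unfolding \<omega>_def by (simp add: algebra_simps)
    finally have "\<omega> * (c * (of_nat N + 1/2)) / c = \<omega> * of_nat N + of_real pi * \<i>" .
    then have "K w2 = exp (\<omega> * of_nat N + of_real pi * \<i>) / w2" unfolding K_def w2(3) by simp
    then have K2: "K w2 = - 1 / w2" using eN by (simp add: exp_add)
    show ?thesis using w1 w2 K1 K2 by blast
  qed
  from l show False
  proof
    assume lim: "(K \<longlongrightarrow> l) (at b)"
    define \<eta> where "\<eta> = norm (1 / b) / 4"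
    have \<eta>: "\<eta> > 0" unfolding \<eta>_def using b0 by simp
    have e1: "\<forall>\<^sub>F w in at b. norm (K w - l) < \<eta>"
      using lim \<eta> by (simp add: tendsto_iff dist_norm)
    have "((\<lambda>w. 1 / w) \<longlongrightarrow> 1 / b) (at b)" using b0 by (intro tendsto_intros) auto
    then have e2: "\<forall>\<^sub>F w in at b. norm (1 / w - 1 / b) < \<eta>"
      using \<eta> by (simp add: tendsto_iff dist_norm)
    obtain \<epsilon> where \<epsilon>: "\<epsilon> > 0" "\<And>w. w \<noteq> b \<Longrightarrow> dist w b < \<epsilon> \<Longrightarrow> norm (K w - l) < \<eta> \<and> norm (1 / w - 1 / b) < \<eta>"
      using eventually_conj[OF e1 e2] unfolding eventually_at by blast
    obtain w1 w2 where w: "w1 \<noteq> b" "dist w1 b < \<epsilon>" "w2 \<noteq> b" "dist w2 b < \<epsilon>" "K w1 = 1 / w1" "K w2 = - 1 / w2"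
      using hit[OF \<epsilon>(1)] by blast
    have n1: "norm (1 / b - 1 / w1) < \<eta>" using \<epsilon>(2)[OF w(1,2)] by (simp add: norm_minus_commute)
    have n2: "norm (1 / w1 - l) < \<eta>" using \<epsilon>(2)[OF w(1,2)] w(5) by simp
    have n3: "norm (l + 1 / w2) < \<eta>" using \<epsilon>(2)[OF w(3,4)] w(6) by (simp add: norm_minus_commute add.commute)
    have n4: "norm (1 / b - 1 / w2) < \<eta>" using \<epsilon>(2)[OF w(3,4)] by (simp add: norm_minus_commute)
    have "norm ((1 / b - 1 / w1) + (1 / w1 - l) + (l + 1 / w2) + (1 / b - 1 / w2)) < 4 * \<eta>"
      by (rule sum4_bound[OF n1 n2 n3 n4])
    moreover have "(1 / b - 1 / w1) + (1 / w1 - l) + (l + 1 / w2) + (1 / b - 1 / w2) = 2 / b"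
      by (simp add: field_simps)
    ultimately have "norm (2 / b) < norm (1 / b)" unfolding \<eta>_def by simp
    then have "2 * (1 / norm b) < 1 / norm b" by (simp add: norm_divide)
    moreover have "1 / norm b > 0" using b0 by simp
    ultimately show False by linarith
  next
    assume lim: "((inverse \<circ> K) \<longlongrightarrow> l) (at b)"
    define \<eta> where "\<eta> = norm b / 4"
    have \<eta>: "\<eta> > 0" unfolding \<eta>_def using b0 by simp
    have e1: "\<forall>\<^sub>F w in at b. norm (inverse (K w) - l) < \<eta>"
      using lim \<eta> by (simp add: tendsto_iff dist_norm)
    obtain \<epsilon> where \<epsilon>: "\<epsilon> > 0" "\<And>w. w \<noteq> b \<Longrightarrow> dist w b < \<epsilon> \<Longrightarrow> norm (inverse (K w) - l) < \<eta>"
      using e1 unfolding eventually_at by blast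
    define \<epsilon>' where "\<epsilon>' = min \<epsilon> \<eta>"
    have \<epsilon>': "\<epsilon>' > 0" unfolding \<epsilon>'_def using \<epsilon> \<eta> by simp
    obtain w1 w2 where w: "w1 \<noteq> b" "dist w1 b < \<epsilon>'" "w2 \<noteq> b" "dist w2 b < \<epsilon>'" "K w1 = 1 / w1" "K w2 = - 1 / w2"
      using hit[OF \<epsilon>'] by blast
    have n1: "norm (b - w1) < \<eta>" using w(2) unfolding \<epsilon>'_def by (simp add: dist_norm norm_minus_commute)
    have n2: "norm (w1 - l) < \<eta>" using \<epsilon>(2)[OF w(1)] w(2,5) unfolding \<epsilon>'_def by (simp add: inverse_eq_divide)
    have n3: "norm (l + w2) < \<eta>" using \<epsilon>(2)[OF w(3)] w(4,6) unfolding \<epsilon>'_def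
      by (simp add: inverse_eq_divide norm_minus_commute add.commute)
    have n4: "norm (b - w2) < \<eta>" using w(4) unfolding \<epsilon>'_def by (simp add: dist_norm norm_minus_commute)
    have "norm ((b - w1) + (w1 - l) + (l + w2) + (b - w2)) < 4 * \<eta>"
      by (rule sum4_bound[OF n1 n2 n3 n4])
    moreover have "(b - w1) + (w1 - l) + (l + w2) + (b - w2) = 2 * b" by simp
    ultimately have "norm (2 * b) < norm b" unfolding \<eta>_def by simp
    then show False using b0 by (simp add: norm_mult)
  qed
qed

lemma c_zero:
  fixes F :: "complex \<Rightarrow> complex" and p q :: "complex poly" and c :: complex
  assumes holF: "F holomorphic_on UNIV" and z1: "F z1 \<noteq> 0" and cop: "coprime p q"
    and q0: "poly q 0 \<noteq> 0" and dq: "degree q \<ge> 1"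
    and I: "\<And>z. poly q (exp (2 * pi * \<i> * z)) * F z =
       (c * z * poly q (exp (2 * pi * \<i> * z)) - poly p (exp (2 * pi * \<i> * z))) * deriv F z"
  shows "c = 0"
proof (rule ccontr)
  assume c0: "c \<noteq> 0"
  define \<omega> :: complex where "\<omega> = 2 * pi * \<i>"
  define R where "R = (\<lambda>w. poly p w / poly q w)"
  have qnz: "q \<noteq> 0" using dq by auto
  have "\<not> constant (poly q)" using dq by (simp add: constant_degree)
  then obtain b where qb: "poly q b = 0" using fundamental_theorem_of_algebra by blast
  have b0: "b \<noteq> 0" using qb q0 by auto
  have pb: "poly p b \<noteq> 0" using coprime_no_common_root[OF cop _ qb] by auto
  have evb: "\<forall>\<^sub>F w in at b. poly q w \<noteq> 0 \<and> 1 < norm (c - deriv R w * (\<omega> * w))"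
    using big_derivative[OF qb pb qnz b0, of c] unfolding R_def \<omega>_def .
  have evq: "\<forall>\<^sub>F w in at b. poly q w \<noteq> 0" using evb by (rule eventually_mono) auto
  obtain r where r: "r > 0" "\<And>w. w \<noteq> b \<Longrightarrow> dist w b < r \<Longrightarrow> 1 < norm (c - deriv R w * (\<omega> * w))"
    using evb unfolding eventually_at by blast
  obtain w where w: "w \<noteq> b" "dist w b < r" "poly q w \<noteq> 0" "exp (\<omega> * (R w) / c) = w"
    using picard_solution[OF qb pb evq b0 c0 r(1)] unfolding R_def \<omega>_def by blast
  define z0 where "z0 = R w / c"
  have ez0: "exp (\<omega> * z0) = w" unfolding z0_def using w(4) by simp
  define S where "S = {z. poly q (exp (\<omega> * z)) \<noteq> 0}"
  have Sopen: "open S" unfolding S_def by (intro open_Collect_neq continuous_intros)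
  have z0S: "z0 \<in> S" unfolding S_def using ez0 w(3) by simp
  define g where "g = (\<lambda>z. c * z - R (exp (\<omega> * z)))"
  have holg: "g holomorphic_on S" unfolding g_def R_def S_def by (intro holomorphic_intros) auto
  have "g z0 = c * z0 - R w" unfolding g_def ez0 by simp
  then have g0: "g z0 = 0" unfolding z0_def using c0 by simp
  have eq: "F z = g z * deriv F z" if "z \<in> S" for z
  proof -
    have qz: "poly q (exp (\<omega> * z)) \<noteq> 0" using that unfolding S_def by simp
    from I[of z] have "poly q (exp (\<omega> * z)) * F z = (c * z * poly q (exp (\<omega> * z)) - poly p (exp (\<omega> * z))) * deriv F z"
      unfolding \<omega>_def .
    then show ?thesis unfolding g_def R_def using qz by (simp add: field_simps)
  qed
  have Fz0: "F z0 = 0" using eq[OF z0S] g0 by simp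
  obtain m :: nat where m: "m > 0" "of_nat m * deriv g z0 = 1"
    using residue_lemma[OF holF z1 Fz0 Sopen z0S holg g0 eq] by blast
  have dR: "(R has_field_derivative deriv R w) (at w)"
  proof (rule holomorphic_derivI[of R "{w. poly q w \<noteq> 0}"])
    show "R holomorphic_on {w. poly q w \<noteq> 0}" unfolding R_def by (intro holomorphic_intros) auto
    show "open {w. poly q w \<noteq> 0}" by (intro open_Collect_neq continuous_intros)
  qed (use w in auto)
  have "(g has_field_derivative c - deriv R w * (\<omega> * w)) (at z0)"
  proof -
    have e: "((\<lambda>z. exp (\<omega> * z)) has_field_derivative \<omega> * w) (at z0)"
      using ez0 by (auto intro!: derivative_eq_intros)
    have "((\<lambda>z. R (exp (\<omega> * z))) has_field_derivative deriv R w * (\<omega> * w)) (at z0)"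
      using DERIV_chain2[of R "deriv R w" "\<lambda>z. exp (\<omega> * z)" z0 "\<omega> * w"] dR e ez0 by simp
    then show ?thesis unfolding g_def by (auto intro!: derivative_eq_intros)
  qed
  then have dg: "deriv g z0 = c - deriv R w * (\<omega> * w)" by (rule DERIV_imp_deriv)
  have big: "1 < norm (deriv g z0)" using r(2)[OF w(1,2)] dg by simp
  have "norm (of_nat m * deriv g z0) = 1" using m by simp
  then have "of_nat m * norm (deriv g z0) = 1" by (simp add: norm_mult)
  moreover have "of_nat m * norm (deriv g z0) \<ge> 1 * norm (deriv g z0)"
    using m(1) by (intro mult_right_mono) auto
  ultimately show False using big by simp
qed

lemma antideriv_exists:
  fixes Y :: "complex poly"
  shows "\<exists>Q. pderiv Q = Y"
proof -
  define Q where "Q = (\<Sum>i\<le>degree Y. monom (coeff Y i / of_nat (Suc i)) (Suc i))"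
  have "pderiv Q = (\<Sum>i\<le>degree Y. pderiv (monom (coeff Y i / of_nat (Suc i)) (Suc i)))"
    unfolding Q_def using higher_pderiv_sum[of 1] by simp
  also have "\<dots> = (\<Sum>i\<le>degree Y. monom (coeff Y i) i)"
    by (intro sum.cong refl) (simp add: pderiv_monom del: of_nat_Suc)
  also have "\<dots> = Y" by (rule poly_as_sum_of_monoms)
  finally show ?thesis by blast
qed

lemma simple_roots_dvd:
  fixes p N :: "complex poly"
  assumes "p \<noteq> 0" "\<And>a. poly p a = 0 \<Longrightarrow> poly N a = 0 \<and> poly (pderiv p) a \<noteq> 0"
  shows "p dvd N"
  using assms
proof (induction "degree p" arbitrary: p N rule: less_induct)
  case (less p N)
  show ?case
  proof (cases "\<exists>a. poly p a = 0")
    case False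
    then have "degree p = 0" using fundamental_theorem_of_algebra constant_degree by blast
    then obtain c where c: "p = [:c:]" by (rule degree_eq_zeroE)
    then have "c \<noteq> 0" using less.prems by simp
    then show ?thesis using c by (auto simp: const_poly_dvd_iff dvd_field_iff)
  next
    case True
    then obtain a where a: "poly p a = 0" by blast
    then obtain p2 where p2: "p = [:-a,1:] * p2" using poly_eq_0_iff_dvd by (metis dvdE)
    obtain N2 where N2: "N = [:-a,1:] * N2" using less.prems(2)[OF a] poly_eq_0_iff_dvd by (metis dvdE)
    have p2nz: "p2 \<noteq> 0" using p2 less.prems(1) by auto
    have dp: "pderiv p = [:-a,1:] * pderiv p2 + p2" unfolding p2 pderiv_mult by (simp add: pderiv_pCons)
    have deg: "degree p2 < degree p" unfolding p2 using p2nz degree_mult_eq[of "[:-a,1:]" p2] by (simp del: mult_pCons_left)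
    have p2a: "poly p2 a \<noteq> 0" using less.prems(2)[OF a] dp by simp
    have "p2 dvd N2"
    proof (rule less.hyps[OF deg p2nz])
      fix b assume b: "poly p2 b = 0"
      then have ba: "b \<noteq> a" using p2a by auto
      have pb: "poly p b = 0" unfolding p2 using b by simp
      have "poly N b = 0" using less.prems(2)[OF pb] by simp
      then have "poly N2 b = 0" using ba unfolding N2 by simp
      moreover have "poly (pderiv p) b \<noteq> 0" using less.prems(2)[OF pb] by simp
      then have "poly (pderiv p2) b \<noteq> 0" using dp b by simp
      ultimately show "poly N2 b = 0 \<and> poly (pderiv p2) b \<noteq> 0" by simp
    qed
    then show ?thesis unfolding p2 N2 by (rule mult_dvd_mono[OF dvd_refl])
  qed
qed

lemma logderiv_prod:
  fixes Z :: "complex set" and m :: "complex \<Rightarrow> nat" and w :: complex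
  assumes "finite Z" "w \<notin> Z"
  shows "poly (pderiv (\<Prod>a\<in>Z. [:-a,1:] ^ m a)) w =
         poly (\<Prod>a\<in>Z. [:-a,1:] ^ m a) w * (\<Sum>a\<in>Z. of_nat (m a) / (w - a))"
  using assms
proof (induction Z rule: finite_induct)
  case empty
  then show ?case by simp
next
  case (insert a Z)
  have wa: "w - a \<noteq> 0" using insert.prems by auto
  have IH: "poly (pderiv (\<Prod>a\<in>Z. [:-a,1:] ^ m a)) w =
         poly (\<Prod>a\<in>Z. [:-a,1:] ^ m a) w * (\<Sum>a\<in>Z. of_nat (m a) / (w - a))"
    using insert by auto
  have d1: "poly (pderiv ([:-a,1:] ^ m a)) w = of_nat (m a) * (w - a) ^ m a / (w - a)"
  proof (cases "m a")
    case 0 then show ?thesis by simp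
  next
    case (Suc k)
    have "poly (pderiv ([:-a,1:] ^ Suc k)) w = of_nat (Suc k) * (w - a) ^ k"
      by (simp add: pderiv_power_Suc pderiv_pCons del: power_Suc)
    then show ?thesis using wa Suc by simp
  qed
  show ?case
    using insert.hyps IH d1 wa by (simp add: pderiv_mult algebra_simps add_divide_distrib)
qed

lemma residue_at_root:
  fixes F :: "complex \<Rightarrow> complex" and p q p1 :: "complex poly" and s :: nat
  assumes holF: "F holomorphic_on UNIV" and z1: "F z1 \<noteq> 0" and cop: "coprime p q"
    and pp: "p = [:0,1:] ^ s * p1"
    and I: "\<And>z. poly q (exp (2 * pi * \<i> * z)) * F z = - poly p (exp (2 * pi * \<i> * z)) * deriv F z"
    and a: "poly p1 a = 0" "a \<noteq> 0"
  shows "\<exists>m::nat. m > 0 \<and> poly q a = - (of_nat m * (2 * pi * \<i>) * a ^ (s+1) * poly (pderiv p1) a)"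
proof -
  define \<omega> :: complex where "\<omega> = 2 * pi * \<i>"
  have \<omega>0: "\<omega> \<noteq> 0" unfolding \<omega>_def by simp
  have pa: "poly p a = 0" unfolding pp using a by simp
  have qa: "poly q a \<noteq> 0" using coprime_no_common_root[OF cop pa] by auto
  define za where "za = Ln a / \<omega>"
  have eza: "exp (\<omega> * za) = a" unfolding za_def using \<omega>0 a(2) by simp
  define S where "S = {z. poly q (exp (\<omega> * z)) \<noteq> 0}"
  have Sopen: "open S" unfolding S_def by (intro open_Collect_neq continuous_intros)
  have zaS: "za \<in> S" unfolding S_def using eza qa by simp
  define g where "g = (\<lambda>z. - (poly p (exp (\<omega> * z)) / poly q (exp (\<omega> * z))))"
  have holg: "g holomorphic_on S" unfolding g_def S_def by (intro holomorphic_intros) auto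
  have g0: "g za = 0" unfolding g_def eza using pa by simp
  have eq: "F z = g z * deriv F z" if "z \<in> S" for z
  proof -
    have qz: "poly q (exp (\<omega> * z)) \<noteq> 0" using that unfolding S_def by simp
    from I[of z] have "poly q (exp (\<omega> * z)) * F z = - poly p (exp (\<omega> * z)) * deriv F z"
      unfolding \<omega>_def .
    then show ?thesis unfolding g_def using qz by (simp add: field_simps)
  qed
  have Fza: "F za = 0" using eq[OF zaS] g0 by simp
  obtain m :: nat where m: "m > 0" "of_nat m * deriv g za = 1"
    using residue_lemma[OF holF z1 Fza Sopen zaS holg g0 eq] by blast
  have de: "((\<lambda>z. exp (\<omega> * z)) has_field_derivative \<omega> * a) (at za)"
    using eza by (auto intro!: derivative_eq_intros)
  have dp: "((\<lambda>z. poly p (exp (\<omega> * z))) has_field_derivative poly (pderiv p) a * (\<omega> * a)) (at za)"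
    using DERIV_chain2[OF poly_DERIV de] eza by simp
  have dq: "((\<lambda>z. poly q (exp (\<omega> * z))) has_field_derivative poly (pderiv q) a * (\<omega> * a)) (at za)"
    using DERIV_chain2[OF poly_DERIV de] eza by simp
  have "(g has_field_derivative - ((poly (pderiv p) a * (\<omega> * a) * poly q a - poly p a * (poly (pderiv q) a * (\<omega> * a)))
      / (poly q a * poly q a))) (at za)"
    unfolding g_def using DERIV_minus[OF DERIV_divide[OF dp dq]] eza qa by simp
  then have "deriv g za = - (poly (pderiv p) a * (\<omega> * a) / poly q a)"
    using pa qa by (simp add: DERIV_imp_deriv)
  moreover have "poly (pderiv p) a = a ^ s * poly (pderiv p1) a"
    unfolding pp pderiv_mult using a by simp
  ultimately have "of_nat m * (- (a ^ s * poly (pderiv p1) a * (\<omega> * a) / poly q a)) = 1"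
    using m(2) by simp
  then have "poly q a = - (of_nat m * \<omega> * a ^ (s+1) * poly (pderiv p1) a)"
    using qa by (simp add: field_simps)
  then show ?thesis using m(1) unfolding \<omega>_def by blast
qed

lemma structure_l1:
  fixes F :: "complex \<Rightarrow> complex" and p q :: "complex poly"
  assumes holF: "F holomorphic_on UNIV" and zz: "F zz = 0" and z1: "F z1 \<noteq> 0"
    and cop: "coprime p q" and pnz: "p \<noteq> 0" and q0: "poly q 0 \<noteq> 0" and dq: "degree q \<ge> max (degree p) 1"
    and I: "\<And>z. poly q (exp (2 * pi * \<i> * z)) * F z = - poly p (exp (2 * pi * \<i> * z)) * deriv F z"
  shows "\<exists>(\<Lambda>::complex) (m0::int) (P::complex poly) (Q::complex poly) (Qt::complex poly).
        poly P 0 \<noteq> 0 \<and> (\<exists>w. w \<noteq> 0 \<and> poly P w = 0) \<and>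
        (degree Q = 0 \<longrightarrow> \<Lambda> \<noteq> - 2 * pi * \<i> * (of_int m0 + of_nat (degree P))) \<and>
        (degree Qt = 0 \<longrightarrow> \<Lambda> \<noteq> - 2 * pi * \<i> * of_int m0) \<and>
        (\<forall>z. F z = exp (\<Lambda> * z) *
           (let w = exp (2 * pi * \<i> * z) in
              w powi m0 * poly P w * exp (poly Q w + poly Qt (1 / w))))"
proof -
  define \<omega> :: complex where "\<omega> = 2 * pi * \<i>"
  have \<omega>0: "\<omega> \<noteq> 0" unfolding \<omega>_def by simp
  have qnz: "q \<noteq> 0" using q0 by auto
  define s where "s = order 0 p"
  obtain p1 where p1: "p = [:0,1:] ^ s * p1" "\<not> [:0,1:] dvd p1"
    using order_decomp[OF pnz, of 0] unfolding s_def by auto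
  have p1nz: "p1 \<noteq> 0" using p1 pnz by auto
  have p10: "poly p1 0 \<noteq> 0" using p1(2) poly_eq_0_iff_dvd[of p1 0] by simp
  have pw: "poly p w = w ^ s * poly p1 w" for w unfolding p1(1) by (simp add: poly_power)
  define Z where "Z = {a. poly p1 a = 0}"
  have finZ: "finite Z" unfolding Z_def using poly_roots_finite[OF p1nz] .
  have Z0: "0 \<notin> Z" unfolding Z_def using p10 by simp
  have ex_m: "\<exists>m::nat. m > 0 \<and> poly q a = - (of_nat m * \<omega> * a ^ (s+1) * poly (pderiv p1) a)"
    if "a \<in> Z" for a
    using residue_at_root[OF holF z1 cop p1(1) I, of a] that Z0 unfolding Z_def \<omega>_def by auto
  define mm where "mm = (\<lambda>a. SOME m::nat. m > 0 \<and> poly q a = - (of_nat m * \<omega> * a ^ (s+1) * poly (pderiv p1) a))"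
  have mm: "mm a > 0" "poly q a = - (of_nat (mm a) * \<omega> * a ^ (s+1) * poly (pderiv p1) a)" if "a \<in> Z" for a
    using someI_ex[OF ex_m[OF that]] unfolding mm_def by auto
  have qa: "poly q a \<noteq> 0" if "a \<in> Z" for a
  proof -
    have "poly p a = 0" using that unfolding Z_def pw by simp
    then show ?thesis using coprime_no_common_root[OF cop] by auto
  qed
  have dp1a: "poly (pderiv p1) a \<noteq> 0" if "a \<in> Z" for a using mm(2)[OF that] qa[OF that] by auto
  define hh where "hh = (\<lambda>a. p1 div [:-a,1:])"
  have hh: "p1 = [:-a,1:] * hh a" if "a \<in> Z" for a
  proof -
    have "[:-a,1:] dvd p1" using that unfolding Z_def by (simp add: poly_eq_0_iff_dvd)
    then show ?thesis unfolding hh_def by (rule dvd_mult_div_cancel[symmetric])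
  qed
  have hh_a: "poly (hh a) a = poly (pderiv p1) a" if "a \<in> Z" for a
  proof -
    have "pderiv p1 = pderiv ([:-a,1:] * hh a)" by (subst hh[OF that]) simp
    also have "\<dots> = [:-a,1:] * pderiv (hh a) + hh a" unfolding pderiv_mult by (simp add: pderiv_pCons)
    finally have "pderiv p1 = [:-a,1:] * pderiv (hh a) + hh a" .
    then show ?thesis by simp
  qed
  have hh_w: "poly (hh a) w = poly p1 w / (w - a)" if "a \<in> Z" "w \<noteq> a" for a w
  proof -
    have "poly p1 w = (w - a) * poly (hh a) w" by (subst hh[OF that(1)]) (simp add: algebra_simps)
    then show ?thesis using that(2) by simp
  qed
  define S1 where "S1 = (\<Sum>a\<in>Z. smult (of_nat (mm a)) (hh a))"
  define N where "N = - q - smult \<omega> (monom 1 (s+1) * S1)"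
  have S1a: "poly S1 a = of_nat (mm a) * poly (pderiv p1) a" if "a \<in> Z" for a
  proof -
    have "poly S1 a = (\<Sum>b\<in>Z. of_nat (mm b) * poly (hh b) a)" unfolding S1_def by (simp add: poly_sum)
    also have "\<dots> = of_nat (mm a) * poly (hh a) a + (\<Sum>b\<in>Z - {a}. of_nat (mm b) * poly (hh b) a)"
      using finZ that by (simp add: sum.remove)
    also have "(\<Sum>b\<in>Z - {a}. of_nat (mm b) * poly (hh b) a) = 0"
    proof (intro sum.neutral ballI)
      fix b assume b: "b \<in> Z - {a}"
      have "poly p1 a = 0" using that unfolding Z_def by simp
      then show "of_nat (mm b) * poly (hh b) a = 0" using hh_w[of b a] b by auto
    qed
    finally show ?thesis using hh_a[OF that] by simp
  qed
  have "p1 dvd N"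
  proof (rule simple_roots_dvd[OF p1nz])
    fix a assume "poly p1 a = 0"
    then have a: "a \<in> Z" unfolding Z_def by simp
    have "poly N a = - poly q a - \<omega> * (a ^ (s+1) * poly S1 a)" unfolding N_def by (simp add: poly_monom)
    also have "\<dots> = 0" unfolding S1a[OF a] mm(2)[OF a] by (simp add: algebra_simps)
    finally show "poly N a = 0 \<and> poly (pderiv p1) a \<noteq> 0" using dp1a[OF a] by simp
  qed
  then obtain M where M: "N = p1 * M" by (rule dvdE)
  have KI: "- q = p1 * M + smult \<omega> (monom 1 (s+1) * S1)" using M unfolding N_def by (simp add: algebra_simps)
  define X where "X = ([:0,1:] :: complex poly) ^ s"
  have Xnz: "X \<noteq> 0" unfolding X_def by simp
  define Mhi where "Mhi = M div X"
  define Mlo where "Mlo = M mod X"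
  have Mdec: "M = X * Mhi + Mlo" unfolding Mhi_def Mlo_def by (simp add: mult.commute)
  have dMlo: "Mlo = 0 \<or> degree Mlo < s"
    using degree_mod_less[OF Xnz, of M] unfolding Mlo_def X_def by (auto simp: degree_linear_power)
  obtain \<Lambda> H where LH: "Mhi = pCons \<Lambda> H" by (cases Mhi) auto
  define V where "V = (if Mlo = 0 then 0 else monom 1 (s - degree Mlo) * reflect_poly Mlo)"
  have Vu: "poly V u = u ^ s * poly Mlo (inverse u)" if "u \<noteq> 0" for u
  proof (cases "Mlo = 0")
    case True then show ?thesis unfolding V_def by simp
  next
    case False
    then have ds: "degree Mlo < s" using dMlo by simp
    have "poly V u = u ^ (s - degree Mlo) * (u ^ degree Mlo * poly Mlo (inverse u))"
      unfolding V_def using False that by (simp add: poly_monom poly_reflect_poly_nz)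
    also have "\<dots> = u ^ s * poly Mlo (inverse u)"
      using ds by (simp add: power_add[symmetric] mult.assoc[symmetric])
    finally show ?thesis .
  qed
  have V0: "coeff V 0 = 0"
  proof (cases "Mlo = 0")
    case True then show ?thesis unfolding V_def by simp
  next
    case False
    then have ds: "degree Mlo < s" using dMlo by simp
    then show ?thesis unfolding V_def using False by (simp add: coeff_monom_mult)
  qed
  obtain W where VW: "V = pCons 0 W" using V0 by (cases V) auto
  obtain Q0 where Q0: "pderiv Q0 = smult (1 / \<omega>) H" using antideriv_exists by blast
  obtain Qt where Qt: "pderiv Qt = smult (- 1 / \<omega>) W" using antideriv_exists by blast
  have LI: "\<Lambda> + poly (pderiv Q0) w * (\<omega> * w) - poly (pderiv Qt) (inverse w) * (\<omega> * inverse w)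
      = poly M w / w ^ s" if w0: "w \<noteq> 0" for w
  proof -
    have "poly M w = w ^ s * poly Mhi w + poly Mlo w" unfolding Mdec X_def by (simp add: poly_power)
    then have "poly M w / w ^ s = poly Mhi w + poly Mlo w / w ^ s"
      using w0 by (simp add: add_divide_distrib)
    also have "poly Mlo w / w ^ s = poly V (inverse w)"
      using Vu[of "inverse w"] w0 by (simp add: power_inverse divide_inverse mult.commute)
    also have "poly V (inverse w) = inverse w * poly W (inverse w)" unfolding VW by simp
    finally have "poly M w / w ^ s = \<Lambda> + w * poly H w + inverse w * poly W (inverse w)"
      unfolding LH by simp
    moreover have "\<Lambda> + poly (pderiv Q0) w * (\<omega> * w) - poly (pderiv Qt) (inverse w) * (\<omega> * inverse w)
        = \<Lambda> + w * poly H w + inverse w * poly W (inverse w)"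
    proof -
      have "poly (pderiv Q0) w * (\<omega> * w) = w * poly H w" unfolding Q0 using \<omega>0 by simp
      moreover have "poly (pderiv Qt) (inverse w) * (\<omega> * inverse w) = - (inverse w * poly W (inverse w))"
        unfolding Qt using \<omega>0 by simp
      ultimately show ?thesis by simp
    qed
    ultimately show ?thesis by simp
  qed
  define P where "P = (\<Prod>a\<in>Z. [:-a,1:] ^ mm a)"
  have Pw: "poly P w = (\<Prod>a\<in>Z. (w - a) ^ mm a)" for w unfolding P_def by (simp add: poly_prod poly_power)
  have Pnz_iff: "poly P w = 0 \<longleftrightarrow> w \<in> Z" for w
    unfolding Pw using finZ mm(1) by (auto simp: prod_zero_iff)
  have cI: "- poly q w / poly p w = poly M w / w ^ s + \<omega> * w * (\<Sum>a\<in>Z. of_nat (mm a) / (w - a))"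
    if w0: "w \<noteq> 0" and wZ: "w \<notin> Z" for w
  proof -
    have p1w: "poly p1 w \<noteq> 0" using wZ unfolding Z_def by simp
    have "poly S1 w = (\<Sum>a\<in>Z. of_nat (mm a) * (poly p1 w / (w - a)))"
      unfolding S1_def poly_sum poly_smult
    proof (intro sum.cong refl)
      fix a assume a: "a \<in> Z"
      then have "w \<noteq> a" using wZ by auto
      then show "of_nat (mm a) * poly (hh a) w = of_nat (mm a) * (poly p1 w / (w - a))"
        using hh_w[OF a] by simp
    qed
    also have "\<dots> = poly p1 w * (\<Sum>a\<in>Z. of_nat (mm a) / (w - a))"
      by (simp add: sum_distrib_left mult.commute mult.left_commute)
    finally have S1w: "poly S1 w = poly p1 w * (\<Sum>a\<in>Z. of_nat (mm a) / (w - a))" .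
    have "- poly q w = poly p1 w * poly M w + \<omega> * (w ^ (s+1) * poly S1 w)"
      using arg_cong[OF KI, of "\<lambda>x. poly x w"] by (simp add: poly_monom)
    then show ?thesis unfolding pw S1w using w0 p1w by (simp add: field_simps)
  qed
  define T where "T = (\<lambda>z. exp (\<Lambda> * z + poly Q0 (exp (\<omega> * z)) + poly Qt (exp (- (\<omega> * z)))) * poly P (exp (\<omega> * z)))"
  have holT: "T holomorphic_on UNIV" unfolding T_def by (intro holomorphic_intros)
  have dT: "deriv T z = T z * (- poly q (exp (\<omega> * z)) / poly p (exp (\<omega> * z)))"
    if pz: "poly p (exp (\<omega> * z)) \<noteq> 0" for z
  proof -
    define w where "w = exp (\<omega> * z)"
    have w0: "w \<noteq> 0" unfolding w_def by simp
    have wZ: "w \<notin> Z" using pz unfolding w_def[symmetric] pw Z_def by auto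
    have ew: "exp (- (\<omega> * z)) = inverse w" unfolding w_def by (simp add: exp_minus)
    have "deriv T z = exp (\<Lambda> * z + poly Q0 w + poly Qt (inverse w)) *
        ((\<Lambda> + poly (pderiv Q0) w * (\<omega> * w) - poly (pderiv Qt) (inverse w) * (\<omega> * inverse w)) * poly P w
        + poly (pderiv P) w * (\<omega> * w))"
      using DERIV_imp_deriv[OF F_deriv_formula[of \<Lambda> Q0 Qt P z]]
      unfolding T_def \<omega>_def[symmetric] w_def[symmetric] ew by simp
    also have "poly (pderiv P) w = poly P w * (\<Sum>a\<in>Z. of_nat (mm a) / (w - a))"
      unfolding P_def by (rule logderiv_prod[OF finZ wZ])
    also have "\<Lambda> + poly (pderiv Q0) w * (\<omega> * w) - poly (pderiv Qt) (inverse w) * (\<omega> * inverse w)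
        = poly M w / w ^ s" by (rule LI[OF w0])
    finally have "deriv T z = exp (\<Lambda> * z + poly Q0 w + poly Qt (inverse w)) * poly P w *
        (poly M w / w ^ s + \<omega> * w * (\<Sum>a\<in>Z. of_nat (mm a) / (w - a)))"
      by (simp add: algebra_simps)
    also have "\<dots> = exp (\<Lambda> * z + poly Q0 w + poly Qt (inverse w)) * poly P w * (- poly q w / poly p w)"
      using cI[OF w0 wZ] by simp
    finally show ?thesis unfolding T_def w_def[symmetric] ew .
  qed
  have Wr: "deriv F z * T z = F z * deriv T z" for z
  proof (rule entire_cosparse_eq[of "\<lambda>z. deriv F z * T z" "\<lambda>z. F z * deriv T z"])
    show "(\<lambda>z. deriv F z * T z) holomorphic_on UNIV"
      by (intro holomorphic_intros holomorphic_deriv holF holT) auto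
    show "(\<lambda>z. F z * deriv T z) holomorphic_on UNIV"
      by (intro holomorphic_intros holomorphic_deriv holF holT) auto
    show "\<forall>\<^sub>\<approx>z. deriv F z * T z = F z * deriv T z"
    proof (rule eventually_mono[OF poly_exp_cosparse[OF pnz]])
      fix z assume pz: "poly p (exp (2 * pi * \<i> * z)) \<noteq> 0"
      then have pz': "poly p (exp (\<omega> * z)) \<noteq> 0" unfolding \<omega>_def .
      have "deriv F z = - poly q (exp (\<omega> * z)) / poly p (exp (\<omega> * z)) * F z"
        using I[of z] pz' unfolding \<omega>_def[symmetric] by (simp add: field_simps)
      then show "deriv F z * T z = F z * deriv T z" unfolding dT[OF pz'] by simp
    qed
  qed
  obtain z2 where z2: "poly p (exp (2 * pi * \<i> * z2)) \<noteq> 0"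
    using eventually_happens[OF poly_exp_cosparse[OF pnz]] by auto
  have Tz2: "T z2 \<noteq> 0"
  proof -
    have "exp (\<omega> * z2) \<notin> Z" using z2 unfolding \<omega>_def[symmetric] pw Z_def by auto
    then show ?thesis unfolding T_def using Pnz_iff by simp
  qed
  obtain \<kappa> where \<kappa>: "\<And>z. F z = \<kappa> * T z" using wronskian_const[OF holF holT Tz2 Wr] by blast
  have \<kappa>0: "\<kappa> \<noteq> 0" using z1 \<kappa>[of z1] by auto
  define Q where "Q = Q0 + [:Ln \<kappa>:]"
  have pdQ: "pderiv Q = pderiv Q0" unfolding Q_def by (simp add: pderiv_add pderiv_pCons)
  have Fform: "F z = exp (\<Lambda> * z) *
           (let w = exp (2 * pi * \<i> * z) in
              w powi 0 * poly P w * exp (poly Q w + poly Qt (1 / w)))" for z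
  proof -
    have "1 / exp (\<omega> * z) = exp (- (\<omega> * z))" by (simp add: exp_minus field_simps)
    then show ?thesis unfolding \<kappa> T_def Q_def Let_def \<omega>_def[symmetric] using \<kappa>0
      by (simp add: exp_add algebra_simps)
  qed
  have P0: "poly P 0 \<noteq> 0" using Pnz_iff Z0 by auto
  have Tzz: "T zz = 0" using zz \<kappa>[of zz] \<kappa>0 by simp
  have ezzZ: "exp (\<omega> * zz) \<in> Z" using Tzz unfolding T_def using Pnz_iff by simp
  have Proot: "\<exists>w. w \<noteq> 0 \<and> poly P w = 0"
    using ezzZ Pnz_iff by (intro exI[of _ "exp (\<omega> * zz)"]) auto
  have Qt_cond: "degree Qt = 0 \<longrightarrow> \<Lambda> \<noteq> - 2 * pi * \<i> * of_int 0"
  proof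
    assume "degree Qt = 0"
    then have "pderiv Qt = 0" by (simp add: pderiv_eq_0_iff)
    then have "W = 0" unfolding Qt using \<omega>0 by simp
    then have "V = 0" using VW by simp
    then have "Mlo = 0" unfolding V_def by (auto split: if_splits simp: monom_eq_0_iff)
    then have "poly M 0 = 0 ^ s * \<Lambda>" unfolding Mdec X_def LH by (simp add: poly_power)
    moreover have "- poly q 0 = poly p1 0 * poly M 0"
      using arg_cong[OF KI, of "\<lambda>x. poly x 0"] by (simp add: poly_monom)
    ultimately have "- poly q 0 = poly p1 0 * (0 ^ s * \<Lambda>)" by simp
    then show "\<Lambda> \<noteq> - 2 * pi * \<i> * of_int 0" using q0 by auto
  qed
  have Q_cond: "degree Q = 0 \<longrightarrow> \<Lambda> \<noteq> - 2 * pi * \<i> * (of_int 0 + of_nat (degree P))"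
  proof (intro impI notI)
    assume dQ: "degree Q = 0" and Lam: "\<Lambda> = - 2 * pi * \<i> * (of_int 0 + of_nat (degree P))"
    have LamW: "\<Lambda> + \<omega> * of_nat (degree P) = 0" using Lam unfolding \<omega>_def by simp
    have "pderiv Q = 0" using dQ by (simp add: pderiv_eq_0_iff)
    then have "pderiv Q0 = 0" using pdQ by simp
    then have "H = 0" unfolding Q0 using \<omega>0 by simp
    then have Mform: "M = smult \<Lambda> X + Mlo" unfolding Mdec LH by simp
    define n where "n = degree p1"
    obtain a0 where a0: "a0 \<in> Z" using ezzZ by blast
    have n1: "n \<ge> 1"
    proof (rule ccontr)
      assume "\<not> n \<ge> 1"
      then have "degree p1 = 0" unfolding n_def by simp
      then obtain c where "p1 = [:c:]" by (rule degree_eq_zeroE)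
      then show False using a0 p10 unfolding Z_def by auto
    qed
    have degp: "degree p = s + n" unfolding p1(1) n_def using p1nz
      by (simp add: degree_mult_eq degree_linear_power)
    have degP: "degree P = (\<Sum>a\<in>Z. mm a)" unfolding P_def
      by (subst degree_prod_sum_eq) (auto simp: degree_linear_power)
    have hh_deg: "degree (hh a) = n - 1" "lead_coeff (hh a) = lead_coeff p1" if "a \<in> Z" for a
    proof -
      have hnz: "hh a \<noteq> 0" using hh[OF that] p1nz by auto
      have "degree p1 = degree ([:-a,1:] * hh a)" by (subst hh[OF that]) (rule refl)
      also have "\<dots> = degree [:-a,1:] + degree (hh a)" by (rule degree_mult_eq) (use hnz in simp_all)
      finally have "degree p1 = 1 + degree (hh a)" by simp
      then show "degree (hh a) = n - 1" unfolding n_def by simp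
      have "lead_coeff p1 = lead_coeff ([:-a,1:] * hh a)" using hh[OF that] by (rule arg_cong)
      also have "\<dots> = lead_coeff [:-a,1:] * lead_coeff (hh a)" by (rule lead_coeff_mult)
      finally have "lead_coeff p1 = lead_coeff [:-a,1:] * lead_coeff (hh a)" .
      then show "lead_coeff (hh a) = lead_coeff p1" by simp
    qed
    have cS1: "coeff S1 (n - 1) = of_nat (degree P) * lead_coeff p1"
    proof -
      have "coeff S1 (n - 1) = (\<Sum>a\<in>Z. of_nat (mm a) * lead_coeff p1)"
        unfolding S1_def coeff_sum coeff_smult using hh_deg by (intro sum.cong refl) simp
      also have "\<dots> = of_nat (degree P) * lead_coeff p1" unfolding degP by (simp add: sum_distrib_right)
      finally show ?thesis .
    qed
    have degS1: "degree S1 \<le> n - 1" unfolding S1_def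
      by (intro degree_sum_le finZ) (use hh_deg in \<open>auto intro: order.trans[OF degree_smult_le]\<close>)
    have Xm: "X = monom 1 s" unfolding X_def by (simp add: monom_altdef)
    have c1: "coeff (p1 * M) (s + n) = \<Lambda> * lead_coeff p1"
    proof -
      have "coeff (p1 * smult \<Lambda> X) (s + n) = \<Lambda> * lead_coeff p1"
        unfolding Xm by (simp add: coeff_monom_mult mult.commute[of p1] n_def)
      moreover have "coeff (p1 * Mlo) (s + n) = 0"
      proof (cases "Mlo = 0")
        case False
        then have "degree Mlo < s" using dMlo by simp
        then have "degree (p1 * Mlo) < s + n"
          using degree_mult_le[of p1 Mlo] unfolding n_def by linarith
        then show ?thesis by (rule coeff_eq_0)
      qed simp
      ultimately show ?thesis unfolding Mform by (simp add: distrib_left)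
    qed
    have c2: "coeff (monom 1 (s+1) * S1) (s + n) = of_nat (degree P) * lead_coeff p1"
      using n1 cS1 by (simp add: coeff_monom_mult)
    have cq: "coeff q (s + n) = 0"
    proof -
      have "q = - (p1 * M + smult \<omega> (monom 1 (s+1) * S1))" using arg_cong[OF KI, of uminus] by (simp only: minus_minus)
      then have "coeff q (s + n) = - (\<Lambda> * lead_coeff p1 + \<omega> * (of_nat (degree P) * lead_coeff p1))"
        using c1 c2 by simp
      also have "\<dots> = - (lead_coeff p1 * (\<Lambda> + \<omega> * of_nat (degree P)))" by (simp add: algebra_simps)
      finally show ?thesis using LamW by simp
    qed
    have degq_le: "degree q \<le> s + n"
    proof -
      have dM: "degree M \<le> s"
        unfolding Mform using dMlo
        by (intro degree_add_le) (auto simp: Xm degree_monom_le intro: order.trans[OF degree_smult_le])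
      have "degree (p1 * M) \<le> s + n" using degree_mult_le[of p1 M] dM unfolding n_def by linarith
      moreover have "degree (smult \<omega> (monom 1 (s+1) * S1)) \<le> s + n"
      proof -
        have "degree (monom 1 (s+1) * S1) \<le> degree (monom (1::complex) (s+1)) + degree S1" by (rule degree_mult_le)
        also have "\<dots> \<le> (s + 1) + (n - 1)" using degS1 by (intro add_mono degree_monom_le) auto
        finally show ?thesis using n1 by (intro order.trans[OF degree_smult_le]) auto
      qed
      ultimately have "degree (p1 * M + smult \<omega> (monom 1 (s+1) * S1)) \<le> s + n"
        by (rule degree_add_le)
      moreover have "q = - (p1 * M + smult \<omega> (monom 1 (s+1) * S1))" using arg_cong[OF KI, of uminus] by (simp only: minus_minus)
      ultimately show ?thesis by (metis degree_minus)
    qed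
    have "degree q \<ge> s + n" using dq degp by simp
    then have "degree q = s + n" using degq_le by simp
    then have "lead_coeff q = 0" using cq by simp
    then show False using qnz by simp
  qed
  show ?thesis
    using P0 Proot Q_cond Qt_cond Fform
    by (intro exI[of _ \<Lambda>] exI[of _ "0::int"] exI[of _ P] exI[of _ Q] exI[of _ Qt]) auto
qed

lemma class_R_identity:
  fixes F :: "complex \<Rightarrow> complex" and l :: int
  assumes holF: "F holomorphic_on UNIV" and zz: "F zz = 0" and z1: "F z1 \<noteq> 0"
    and cR: "class_R l (newton_map F)"
  shows "\<exists>p q :: complex poly. coprime p q \<and> p \<noteq> 0 \<and> q \<noteq> 0 \<and> poly q 0 \<noteq> 0 \<and>
     degree q \<ge> max (degree p) 1 \<and>
     (\<forall>z. poly q (exp (2 * pi * \<i> * z)) * F z =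
       ((1 - of_int l) * z * poly q (exp (2 * pi * \<i> * z)) - poly p (exp (2 * pi * \<i> * z))) * deriv F z)"
proof -
  obtain p q :: "complex poly" where pq: "coprime p q" "p \<noteq> 0" "q \<noteq> 0" "poly q 0 \<noteq> 0"
      "degree q \<ge> max (degree p) 1"
    and ev: "\<forall>\<^sub>\<approx>z. newton_map F z = of_int l * z
                      + poly p (exp (2 * pi * \<i> * z)) / poly q (exp (2 * pi * \<i> * z))"
    using cR unfolding class_R_def by blast
  have holdF: "deriv F holomorphic_on UNIV" by (rule holomorphic_deriv[OF holF open_UNIV])
  have "\<exists>z. deriv F z \<noteq> 0"
  proof (rule ccontr)
    assume "\<not> (\<exists>z. deriv F z \<noteq> 0)"
    then have d0: "deriv F z = 0" for z by auto
    have "(F has_field_derivative 0) (at x within UNIV)" for x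
      using holomorphic_derivI[OF holF open_UNIV, of x] d0 by simp
    then obtain c where "\<forall>x\<in>UNIV. F x = c" using has_field_derivative_zero_constant[OF convex_UNIV] by blast
    then show False using zz z1 by auto
  qed
  then obtain z3 where "deriv F z3 \<noteq> 0" by blast
  then have evd: "\<forall>\<^sub>\<approx>z. deriv F z \<noteq> 0" using entire_nonzero_cosparse[OF holdF] by blast
  have "\<forall>z. poly q (exp (2 * pi * \<i> * z)) * F z =
       ((1 - of_int l) * z * poly q (exp (2 * pi * \<i> * z)) - poly p (exp (2 * pi * \<i> * z))) * deriv F z"
  proof
    fix z
    show "poly q (exp (2 * pi * \<i> * z)) * F z =
       ((1 - of_int l) * z * poly q (exp (2 * pi * \<i> * z)) - poly p (exp (2 * pi * \<i> * z))) * deriv F z"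
    proof (rule entire_cosparse_eq[of "\<lambda>z. poly q (exp (2 * pi * \<i> * z)) * F z"
        "\<lambda>z. ((1 - of_int l) * z * poly q (exp (2 * pi * \<i> * z)) - poly p (exp (2 * pi * \<i> * z))) * deriv F z"])
      show "(\<lambda>z. poly q (exp (2 * pi * \<i> * z)) * F z) holomorphic_on UNIV"
        by (intro holomorphic_intros holF)
      show "(\<lambda>z. ((1 - of_int l) * z * poly q (exp (2 * pi * \<i> * z)) - poly p (exp (2 * pi * \<i> * z))) * deriv F z) holomorphic_on UNIV"
        by (intro holomorphic_intros holdF)
      have ev3: "\<forall>\<^sub>\<approx>z. (newton_map F z = of_int l * z
                      + poly p (exp (2 * pi * \<i> * z)) / poly q (exp (2 * pi * \<i> * z))) \<and>
               deriv F z \<noteq> 0 \<and> poly q (exp (2 * pi * \<i> * z)) \<noteq> 0"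
        using ev evd poly_exp_cosparse[OF pq(3)] by (intro eventually_conj)
      show "\<forall>\<^sub>\<approx>z. poly q (exp (2 * pi * \<i> * z)) * F z =
           ((1 - of_int l) * z * poly q (exp (2 * pi * \<i> * z)) - poly p (exp (2 * pi * \<i> * z))) * deriv F z"
      proof (rule eventually_mono[OF ev3])
        fix z
        assume h: "(newton_map F z = of_int l * z
                      + poly p (exp (2 * pi * \<i> * z)) / poly q (exp (2 * pi * \<i> * z))) \<and>
               deriv F z \<noteq> 0 \<and> poly q (exp (2 * pi * \<i> * z)) \<noteq> 0"
        define w where "w = exp (2 * pi * \<i> * z)"
        have h1: "z - F z / deriv F z = of_int l * z + poly p w / poly q w"
          using h unfolding newton_map_def w_def by simp
        have d: "deriv F z \<noteq> 0" and qw: "poly q w \<noteq> 0" using h unfolding w_def by auto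
        from h1 have "F z / deriv F z = (1 - of_int l) * z - poly p w / poly q w"
          by (simp add: algebra_simps)
        then have "F z = ((1 - of_int l) * z - poly p w / poly q w) * deriv F z"
          using d by (simp add: field_simps)
        then show "poly q w * F z = ((1 - of_int l) * z * poly q w - poly p w) * deriv F z"
          using qw by (simp add: field_simps)
      qed
    qed
  qed
  then show ?thesis using pq by blast
qed

lemma forward_dir:
  fixes F :: "complex \<Rightarrow> complex" and l :: int
  assumes holF: "F holomorphic_on UNIV" and ex0: "\<exists>z. F z = 0" and exn: "\<exists>z. F z \<noteq> 0"
    and cR: "class_R l (newton_map F)"
  shows "(l = 1 \<and>
     (\<exists>(\<Lambda>::complex) (m0::int) (P::complex poly) (Q::complex poly) (Qt::complex poly).
        poly P 0 \<noteq> 0 \<and> (\<exists>w. w \<noteq> 0 \<and> poly P w = 0) \<and>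
        (degree Q = 0 \<longrightarrow> \<Lambda> \<noteq> - 2 * pi * \<i> * (of_int m0 + of_nat (degree P))) \<and>
        (degree Qt = 0 \<longrightarrow> \<Lambda> \<noteq> - 2 * pi * \<i> * of_int m0) \<and>
        (\<forall>z. F z = exp (\<Lambda> * z) *
           (let w = exp (2 * pi * \<i> * z) in
              w powi m0 * poly P w * exp (poly Q w + poly Qt (1 / w))))))"
proof -
  obtain zz where zz: "F zz = 0" using ex0 by blast
  obtain z1 where z1: "F z1 \<noteq> 0" using exn by blast
  obtain p q :: "complex poly" where pq: "coprime p q" "p \<noteq> 0" "q \<noteq> 0" "poly q 0 \<noteq> 0"
      "degree q \<ge> max (degree p) 1"
    and I: "\<forall>z. poly q (exp (2 * pi * \<i> * z)) * F z =
     ((1 - of_int l) * z * poly q (exp (2 * pi * \<i> * z)) - poly p (exp (2 * pi * \<i> * z))) * deriv F z"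
    using class_R_identity[OF holF zz z1 cR] by blast
  have dq1: "degree q \<ge> 1" using pq(5) by simp
  have c0: "(1 - of_int l :: complex) = 0"
    by (rule c_zero[OF holF z1 pq(1) pq(4) dq1]) (use I in auto)
  then have l1: "l = 1" by (metis eq_iff_diff_eq_0 of_int_eq_1_iff)
  have I': "\<And>z. poly q (exp (2 * pi * \<i> * z)) * F z = - poly p (exp (2 * pi * \<i> * z)) * deriv F z"
    using I c0 by simp
  show ?thesis by (intro conjI l1 structure_l1[OF holF zz z1 pq(1,2,4,5) I'])
qed

lemma backward_dir:
  fixes F :: "complex \<Rightarrow> complex" and l :: int
  assumes "(l = 1 \<and>
     (\<exists>(\<Lambda>::complex) (m0::int) (P::complex poly) (Q::complex poly) (Qt::complex poly).
        poly P 0 \<noteq> 0 \<and> (\<exists>w. w \<noteq> 0 \<and> poly P w = 0) \<and>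
        (degree Q = 0 \<longrightarrow> \<Lambda> \<noteq> - 2 * pi * \<i> * (of_int m0 + of_nat (degree P))) \<and>
        (degree Qt = 0 \<longrightarrow> \<Lambda> \<noteq> - 2 * pi * \<i> * of_int m0) \<and>
        (\<forall>z. F z = exp (\<Lambda> * z) *
           (let w = exp (2 * pi * \<i> * z) in
              w powi m0 * poly P w * exp (poly Q w + poly Qt (1 / w))))))"
  shows "class_R l (newton_map F)"
proof -
  have l1: "l = 1" using assms by (rule conjunct1)
  have ex: "\<exists>(\<Lambda>::complex) (m0::int) (P::complex poly) (Q::complex poly) (Qt::complex poly).
        poly P 0 \<noteq> 0 \<and> (\<exists>w. w \<noteq> 0 \<and> poly P w = 0) \<and>
        (degree Q = 0 \<longrightarrow> \<Lambda> \<noteq> - 2 * pi * \<i> * (of_int m0 + of_nat (degree P))) \<and>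
        (degree Qt = 0 \<longrightarrow> \<Lambda> \<noteq> - 2 * pi * \<i> * of_int m0) \<and>
        (\<forall>z. F z = exp (\<Lambda> * z) *
           (let w = exp (2 * pi * \<i> * z) in
              w powi m0 * poly P w * exp (poly Q w + poly Qt (1 / w))))"
    using assms by (rule conjunct2)
  from ex show ?thesis unfolding l1 by (elim exE) (rule backward; blast)
qed

theorem theoremC:
  fixes F :: "complex \<Rightarrow> complex" and l :: int
  assumes "F holomorphic_on UNIV"
    and "\<exists>z. F z = 0"
    and "\<exists>z. F z \<noteq> 0"
  shows "class_R l (newton_map F) \<longleftrightarrow>
    (l = 1 \<and>
     (\<exists>(\<Lambda>::complex) (m0::int) (P::complex poly) (Q::complex poly) (Qt::complex poly).
        poly P 0 \<noteq> 0 \<and> (\<exists>w. w \<noteq> 0 \<and> poly P w = 0) \<and>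
        (degree Q = 0 \<longrightarrow> \<Lambda> \<noteq> - 2 * pi * \<i> * (of_int m0 + of_nat (degree P))) \<and>
        (degree Qt = 0 \<longrightarrow> \<Lambda> \<noteq> - 2 * pi * \<i> * of_int m0) \<and>
        (\<forall>z. F z = exp (\<Lambda> * z) *
           (let w = exp (2 * pi * \<i> * z) in
              w powi m0 * poly P w * exp (poly Q w + poly Qt (1 / w))))))"
  apply (rule iffI)
   apply (erule forward_dir[OF assms])
  apply (erule backward_dir)
  done

end
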